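(* With $H_t$ the auxiliary process defined below, for all $(x_t,x_{t-1})\in\mathbb{R}^d\times\mathbb{R}^d$, $$\log\frac{p_{X_{t-1}|X_t}(x_{t-1}|x_t)}{p_{H_{t-1}|H_t}(x_{t-1}|x_t)}\le T^{c_0+2c_R+2}\Big\{\|x_{t-1}-x_t/\sqrt{\alpha_t}\|_2^2+\|x_t\|_2^2+1\Big\}.$$
   Context: $T$ large; $X_0$ continuous in $\mathbb{R}^d$ with $\|X_0\|_2\le T^{c_R}$ a.s.; learning rates $\beta_1=1-\alpha_1=T^{-c_0}$, $\beta_t=1-\alpha_t=\frac{c_1\log T}{T}\min\{\beta_1(1+\frac{c_1\log T}{T})^t,1\}$ for $t>1$, $c_0,c_1$ large constants, $\overline\alpha_t=\prod_{k\le t}\alpha_k$; forward process $X_t=\sqrt{\alpha_t}X_{t-1}+\sqrt{1-\alpha_t}W_t$ with i.i.d. $W_t\sim\mathcal N(0,I_d)$; $s_t^\star=\nabla\log p_{X_t}$; $\widehat\mu_t^\star(x)=\frac{1}{\sqrt{\alpha_t}}(x+(1-\alpha_t)s_t^\star(x))$; $g_t(x)=-(1-\overline\alpha_t)s_t^\star(x)$, $J_t(x)=\partial g_t(x)/\partial x$. Auxiliary process: $H_T\sim\mathcal N(0,I_d)$, $H_{t-1}=\widehat\mu_t^\star(H_t)+\sqrt{\frac{1-\alpha_t}{2\alpha_t}}(Z_t-\frac{1-\alpha_t}{1-\overline\alpha_t}J_t(H_t)Z_t+Z_t^+)$ with $Z_t,Z_t^+$ i.i.d. $\mathcal N(0,I_d)$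 independent of everything else. *)

theory Defs
  imports "HOL-Analysis.Analysis" "HOL-Probability.Probability"
begin

definition gauss_pdf :: "real^'n \<Rightarrow> real^'n^'n \<Rightarrow> real^'n \<Rightarrow> real" where
  "gauss_pdf mu S y =
     (2 * pi) powr (- real CARD('n) / 2) * det S powr (-1/2)
     * exp (- (1/2) * ((y - mu) \<bullet> (matrix_inv S *v (y - mu))))"

definition lr_beta :: "nat \<Rightarrow> real \<Rightarrow> real \<Rightarrow> nat \<Rightarrow> real" where
  "lr_beta T c0 c1 t =
     (if t \<le> 1 then real T powr (- c0)
      else (c1 * ln (real T) / real T)
           * min (real T powr (- c0) * (1 + c1 * ln (real T) / real T) ^ t) 1)"

definition lr_alpha :: "nat \<Rightarrow> real \<Rightarrow> real \<Rightarrow> nat \<Rightarrow> real" where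
  "lr_alpha T c0 c1 t = 1 - lr_beta T c0 c1 t"

definition lr_alphabar :: "nat \<Rightarrow> real \<Rightarrow> real \<Rightarrow> nat \<Rightarrow> real" where
  "lr_alphabar T c0 c1 t = (\<Prod>k\<in>{1..t}. lr_alpha T c0 c1 k)"

text \<open>Density of X_t (t >= 1) when X_0 has law M:
  X_t = sqrt(alphabar_t) X_0 + sqrt(1 - alphabar_t) Wbar, Wbar ~ N(0, I).\<close>
definition pX :: "nat \<Rightarrow> real \<Rightarrow> real \<Rightarrow> (real^'n) measure \<Rightarrow> nat \<Rightarrow> real^'n \<Rightarrow> real" where
  "pX T c0 c1 M t x =
     (LINT y|M. gauss_pdf (sqrt (lr_alphabar T c0 c1 t) *\<^sub>R y)
                          ((1 - lr_alphabar T c0 c1 t) *\<^sub>R mat 1) x)"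

text \<open>Conditional density p_{X_{t-1}|X_t}(xprev | xt) (Bayes), for t >= 2.\<close>
definition condX :: "nat \<Rightarrow> real \<Rightarrow> real \<Rightarrow> (real^'n) measure \<Rightarrow> nat \<Rightarrow> real^'n \<Rightarrow> real^'n \<Rightarrow> real" where
  "condX T c0 c1 M t xprev xt =
     pX T c0 c1 M (t - 1) xprev
     * gauss_pdf (sqrt (lr_alpha T c0 c1 t) *\<^sub>R xprev) ((1 - lr_alpha T c0 c1 t) *\<^sub>R mat 1) xt
     / pX T c0 c1 M t xt"

definition score :: "nat \<Rightarrow> real \<Rightarrow> real \<Rightarrow> (real^'n) measure \<Rightarrow> nat \<Rightarrow> real^'n \<Rightarrow> real^'n" where
  "score T c0 c1 M t x =
     (\<chi> i. frechet_derivative (\<lambda>z. ln (pX T c0 c1 M t z)) (at x) (axis i 1))"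

definition gfun :: "nat \<Rightarrow> real \<Rightarrow> real \<Rightarrow> (real^'n) measure \<Rightarrow> nat \<Rightarrow> real^'n \<Rightarrow> real^'n" where
  "gfun T c0 c1 M t x = (- (1 - lr_alphabar T c0 c1 t)) *\<^sub>R score T c0 c1 M t x"

definition Jac :: "nat \<Rightarrow> real \<Rightarrow> real \<Rightarrow> (real^'n) measure \<Rightarrow> nat \<Rightarrow> real^'n \<Rightarrow> real^'n^'n" where
  "Jac T c0 c1 M t x = matrix (frechet_derivative (gfun T c0 c1 M t) (at x))"

definition muhat :: "nat \<Rightarrow> real \<Rightarrow> real \<Rightarrow> (real^'n) measure \<Rightarrow> nat \<Rightarrow> real^'n \<Rightarrow> real^'n" where
  "muhat T c0 c1 M t x =
     (1 / sqrt (lr_alpha T c0 c1 t)) *\<^sub>R (x + (1 - lr_alpha T c0 c1 t) *\<^sub>R score T c0 c1 M t x)"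

definition SigmaH :: "nat \<Rightarrow> real \<Rightarrow> real \<Rightarrow> (real^'n) measure \<Rightarrow> nat \<Rightarrow> real^'n \<Rightarrow> real^'n^'n" where
  "SigmaH T c0 c1 M t x =
     (let c = (1 - lr_alpha T c0 c1 t) / (1 - lr_alphabar T c0 c1 t);
          A = mat 1 - c *\<^sub>R Jac T c0 c1 M t x
      in ((1 - lr_alpha T c0 c1 t) / (2 * lr_alpha T c0 c1 t)) *\<^sub>R (A ** transpose A + mat 1))"

text \<open>Conditional density p_{H_{t-1}|H_t}(xprev | xt).\<close>
definition condH :: "nat \<Rightarrow> real \<Rightarrow> real \<Rightarrow> (real^'n) measure \<Rightarrow> nat \<Rightarrow> real^'n \<Rightarrow> real^'n \<Rightarrow> real" where
  "condH T c0 c1 M t xprev xt =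
     gauss_pdf (muhat T c0 c1 M t xt) (SigmaH T c0 c1 M t xt) xprev"

end

theory Submission
  imports Defs
begin

lemma det_smat: "det ((s::real) *\<^sub>R (mat 1 :: real^'n^'n)) = s ^ CARD('n)"
  by (subst det_diagonal) (auto simp: mat_def)

lemma matrix_inv_smat:
  assumes "(s::real) \<noteq> 0"
  shows "matrix_inv (s *\<^sub>R (mat 1 :: real^'n^'n)) = (1/s) *\<^sub>R mat 1"
proof -
  let ?S = "s *\<^sub>R (mat 1 :: real^'n^'n)"
  have ex: "\<exists>A'. ?S ** A' = mat 1 \<and> A' ** ?S = mat 1"
    by (rule exI[of _ "(1/s) *\<^sub>R mat 1"]) (simp add: assms matrix_scalar_ac)
  have "?S ** matrix_inv ?S = mat 1"
    using someI_ex[OF ex] unfolding matrix_inv_def by blast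
  hence "s *\<^sub>R matrix_inv ?S = mat 1"
    by (simp add: flip: scalar_matrix_assoc)
  hence "(1/s) *\<^sub>R (s *\<^sub>R matrix_inv ?S) = (1/s) *\<^sub>R mat 1" by simp
  thus ?thesis using assms by simp
qed

lemma gauss_iso:
  assumes "(s::real) > 0"
  shows "gauss_pdf mu (s *\<^sub>R (mat 1 :: real^'n^'n)) x =
    (2 * pi) powr (- real CARD('n) / 2) * (s ^ CARD('n)) powr (-1/2)
     * exp (- ((x - mu) \<bullet> (x - mu)) / (2 * s))"
proof -
  have "((1/s) *\<^sub>R (mat 1 :: real^'n^'n)) *v (x - mu) = (1/s) *\<^sub>R (x - mu)"
    by (simp add: vec_eq_iff matrix_vector_mult_def mat_def if_distrib if_distribR cong del: if_weak_cong)
  thus ?thesis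
  using assms by (simp add: gauss_pdf_def det_smat matrix_inv_smat)
qed

lemma remainder_bound:
  fixes f :: "real^'n \<Rightarrow> real" and G :: "real^'n \<Rightarrow> real^'n"
  assumes der: "\<And>z. (f has_derivative (\<lambda>h. h \<bullet> G z)) (at z)"
    and lip: "\<And>z. norm (z - x0) \<le> norm h \<Longrightarrow> norm (G z - G x0) \<le> L * norm (z - x0)"
    and L: "L \<ge> 0"
  shows "\<bar>f (x0 + h) - f x0 - h \<bullet> G x0\<bar> \<le> L * (norm h)^2"
proof -
  let ?F = "\<lambda>z. f z - z \<bullet> G x0"
  let ?S = "cball x0 (norm h)"
  have d: "(?F has_derivative (\<lambda>k. k \<bullet> (G z - G x0))) (at z within ?S)" for z
  proof -
    have "(?F has_derivative (\<lambda>k. k \<bullet> G z - k \<bullet> G x0)) (at z)"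
      by (intro derivative_intros der)
    thus ?thesis by (simp add: inner_diff_right has_derivative_at_withinI)
  qed
  have b: "onorm (\<lambda>k. k \<bullet> (G z - G x0)) \<le> L * norm h" if "z \<in> ?S" for z
  proof (rule onorm_le)
    fix k
    have "norm (k \<bullet> (G z - G x0)) \<le> norm k * norm (G z - G x0)"
      by (simp add: Cauchy_Schwarz_ineq2)
    also have "\<dots> \<le> norm k * (L * norm (z - x0))"
      using that lip[of z] by (intro mult_left_mono) (auto simp: dist_norm norm_minus_commute)
    also have "\<dots> \<le> norm k * (L * norm h)"
      using that L by (intro mult_left_mono) (auto simp: dist_norm norm_minus_commute)
    finally show "norm (k \<bullet> (G z - G x0)) \<le> L * norm h * norm k" by (simp add: algebra_simps)
  qed
  have "norm (?F (x0 + h) - ?F x0) \<le> L * norm h * norm ((x0 + h) - x0)"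
    by (rule differentiable_bound[OF convex_cball d b]) (auto simp: dist_norm)
  thus ?thesis by (simp add: inner_add_left power2_eq_square algebra_simps)
qed

lemma diff_under_integral:
  fixes psi :: "real^'n \<Rightarrow> 'b \<Rightarrow> real" and G :: "real^'n \<Rightarrow> 'b \<Rightarrow> real^'n"
  assumes M: "prob_space M"
    and AE: "AE y in M. Sy y"
    and meas: "\<And>x. psi x \<in> borel_measurable M" "\<And>x. G x \<in> borel_measurable M"
    and der: "\<And>y z. ((\<lambda>x. psi x y) has_derivative (\<lambda>h. h \<bullet> G z y)) (at z)"
    and bnd: "\<And>y z. Sy y \<Longrightarrow> norm (z - x0) \<le> 1 \<Longrightarrow> \<bar>psi z y\<bar> \<le> B \<and> norm (G z y) \<le> B"
    and lip: "\<And>y z w. Sy y \<Longrightarrow> norm (z - x0) \<le> 1 \<Longrightarrow> norm (w - x0) \<le> 1 \<Longrightarrow>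
                 norm (G z y - G w y) \<le> L * norm (z - w)"
    and L: "L \<ge> 0"
  shows "((\<lambda>x. \<integral>y. psi x y \<partial>M) has_derivative (\<lambda>h. h \<bullet> (\<integral>y. G x0 y \<partial>M))) (at x0)"
proof -
  interpret prob_space M by (rule M)
  have intpsi: "integrable M (psi z)" if "norm (z - x0) \<le> 1" for z
    by (rule integrable_const_bound[where B=B]) (use AE bnd that meas in \<open>auto elim: AE_mp\<close>)
  have intG: "integrable M (G z)" if "norm (z - x0) \<le> 1" for z
    by (rule integrable_const_bound[where B=B]) (use AE bnd that meas in \<open>auto elim: AE_mp\<close>)
  have rem: "\<bar>psi (x0 + h) y - psi x0 y - h \<bullet> G x0 y\<bar> \<le> L * (norm h)^2"
    if "Sy y" "norm h \<le> 1" for y h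
    by (rule remainder_bound[where f="\<lambda>x. psi x y" and G="\<lambda>z. G z y"])
       (use der lip[OF \<open>Sy y\<close>] that L in auto)
  show ?thesis
    unfolding has_derivative_at_alt
  proof (intro conjI allI impI)
    show "bounded_linear (\<lambda>h. h \<bullet> (\<integral>y. G x0 y \<partial>M))" by (rule bounded_linear_inner_left)
  next
    fix e :: real assume e: "e > 0"
    show "\<exists>d>0. \<forall>x. norm (x - x0) < d \<longrightarrow>
       norm ((\<integral>y. psi x y \<partial>M) - (\<integral>y. psi x0 y \<partial>M) - (x - x0) \<bullet> (\<integral>y. G x0 y \<partial>M))
        \<le> e * norm (x - x0)"
    proof (intro exI[of _ "min 1 (e / (L + 1))"] conjI allI impI)
      show "0 < min 1 (e / (L + 1))" using e L by auto
      fix x assume x: "norm (x - x0) < min 1 (e / (L + 1))"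
      define h where "h = x - x0"
      have h1: "norm h \<le> 1" using x h_def by auto
      have xe: "x = x0 + h" using h_def by simp
      have eq: "(\<integral>y. psi x y \<partial>M) - (\<integral>y. psi x0 y \<partial>M) - h \<bullet> (\<integral>y. G x0 y \<partial>M)
          = (\<integral>y. psi x y - psi x0 y - h \<bullet> G x0 y \<partial>M)"
        using intpsi[of x] intpsi[of x0] intG[of x0] h1 xe
        by (simp add: integral_diff integrable_diff)
      have "\<bar>\<integral>y. psi x y - psi x0 y - h \<bullet> G x0 y \<partial>M\<bar>
             \<le> (\<integral>y. \<bar>psi x y - psi x0 y - h \<bullet> G x0 y\<bar> \<partial>M)"
        using integral_norm_bound[of M "\<lambda>y. psi x y - psi x0 y - h \<bullet> G x0 y"] by simp
      also have "\<dots> \<le> (\<integral>y. L * (norm h)^2 \<partial>M)"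
      proof (rule integral_mono_AE)
        show "integrable M (\<lambda>y. \<bar>psi x y - psi x0 y - h \<bullet> G x0 y\<bar>)"
          using intpsi[of x] intpsi[of x0] intG[of x0] h1 xe by auto
        show "AE y in M. \<bar>psi x y - psi x0 y - h \<bullet> G x0 y\<bar> \<le> L * (norm h)\<^sup>2"
          using AE by eventually_elim (use rem h1 xe in auto)
      qed simp
      also have "\<dots> = L * (norm h)^2" by (simp add: prob_space)
      also have "\<dots> \<le> e * norm h"
      proof -
        have "L * norm h \<le> e"
        proof -
          have "L * norm h \<le> (L + 1) * (e / (L + 1))"
            using x h_def L by (intro mult_mono) auto
          also have "\<dots> = e" using L by simp
          finally show ?thesis .
        qed
        hence "L * norm h * norm h \<le> e * norm h" by (intro mult_right_mono) auto
        thus ?thesis by (simp add: power2_eq_square mult.assoc)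
      qed
      finally show "norm ((\<integral>y. psi x y \<partial>M) - (\<integral>y. psi x0 y \<partial>M) - (x - x0) \<bullet> (\<integral>y. G x0 y \<partial>M))
        \<le> e * norm (x - x0)" using eq h_def by simp
    qed
  qed
qed

definition "phk K s c x y = K * exp (- (1 / (2 * s)) * ((x - c *\<^sub>R y) \<bullet> (x - c *\<^sub>R y)))"
definition "grk K s c x y = (- phk K s c x y / s) *\<^sub>R (x - c *\<^sub>R (y::real^'n))"
definition "hek K s c i x y = phk K s c x y *\<^sub>R
   ((((x - c *\<^sub>R y) $ i) / s^2) *\<^sub>R (x - c *\<^sub>R y) - (1/s) *\<^sub>R axis i (1::real))"

lemma phk_deriv:
  assumes "s > 0"
  shows "((\<lambda>x. phk K s c x y) has_derivative (\<lambda>h. h \<bullet> grk K s c z y)) (at z)"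
  unfolding phk_def grk_def
  apply (rule derivative_eq_intros refl)+
  apply (rule ext)
  using assms apply (simp add: inner_commute algebra_simps divide_simps)
  done


lemma grk_comp: "grk K s c x y $ i = (- phk K s c x y / s) * ((x - c *\<^sub>R y) \<bullet> axis i 1)"
  by (simp add: grk_def inner_axis)

lemma grk_deriv:
  assumes "s > 0"
  shows "((\<lambda>x. grk K s c x y $ i) has_derivative (\<lambda>h. h \<bullet> hek K s c i z y)) (at z)"
proof -
  have s0: "s \<noteq> 0" using assms by simp
  show ?thesis
  unfolding grk_comp
  apply (rule derivative_eq_intros refl phk_deriv[OF assms] s0)+
  apply (rule ext)
  using assms apply (simp add: hek_def grk_def inner_commute algebra_simps divide_simps inner_axis power2_eq_square)
  done
qed
lemma phk_nonneg: "K \<ge> 0 \<Longrightarrow> phk K s c x y \<ge> 0"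
  by (simp add: phk_def)

lemma phk_le: "K \<ge> 0 \<Longrightarrow> s > 0 \<Longrightarrow> phk K s c x y \<le> K"
proof -
  assume K: "K \<ge> 0" and s: "s > 0"
  have "- (1 / (2 * s)) * ((x - c *\<^sub>R y) \<bullet> (x - c *\<^sub>R y)) \<le> 0"
    using s by (simp add: mult_nonneg_nonneg)
  hence "exp (- (1 / (2 * s)) * ((x - c *\<^sub>R y) \<bullet> (x - c *\<^sub>R y))) \<le> 1" by simp
  thus ?thesis unfolding phk_def using K by (simp add: mult_left_le)
qed

lemma norm_u_bound:
  fixes z x0 y :: "real^'n"
  assumes "norm y \<le> R" "0 \<le> c" "c \<le> 1" "norm (z - x0) \<le> 1"
  shows "norm (z - c *\<^sub>R y) \<le> norm x0 + 1 + R"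
proof -
  have "norm (z - c *\<^sub>R y) \<le> norm z + norm (c *\<^sub>R y)" by (rule norm_triangle_ineq4)
  also have "norm (c *\<^sub>R y) \<le> R"
    using assms by (simp add: mult_le_one[of c "norm y"] order_trans[OF mult_left_le_one_le[of "norm y" c]])
  also have "norm z \<le> norm x0 + 1" using assms(4) norm_triangle_sub[of z x0] by (smt (verit) norm_minus_commute norm_triangle_ineq2)
  finally show ?thesis by simp
qed

lemma grk_deriv_vec:
  assumes "s > 0"
  shows "((\<lambda>x. grk K s c x y) has_derivative
     (\<lambda>h. (- (h \<bullet> grk K s c z y) / s) *\<^sub>R (z - c *\<^sub>R y) + (- phk K s c z y / s) *\<^sub>R h)) (at z)"
proof -
  have s0: "s \<noteq> 0" using assms by simp
  show ?thesis
  unfolding grk_def[of K s c _ y]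
  apply (rule derivative_eq_intros refl phk_deriv[OF assms] s0)+
  apply (rule ext)
  apply (simp add: grk_def algebra_simps)
  done
qed

lemma lip_from_deriv:
  fixes f :: "real^'n \<Rightarrow> real^'n"
  assumes "\<And>z. (f has_derivative f' z) (at z)"
    and "\<And>z h. norm (z - x0) \<le> 1 \<Longrightarrow> norm (f' z h) \<le> B * norm h"
    and "norm (z - x0) \<le> 1" "norm (w - x0) \<le> 1"
  shows "norm (f z - f w) \<le> B * norm (z - w)"
proof (rule differentiable_bound[where S="cball x0 1" and f'=f'])
  show "convex (cball x0 1)" by simp
  show "(f has_derivative f' x) (at x within cball x0 1)" for x
    using assms(1) by (rule has_derivative_at_withinI)
  show "onorm (f' x) \<le> B" if "x \<in> cball x0 1" for x
    by (rule onorm_le) (use assms(2) that in \<open>auto simp: dist_norm norm_minus_commute\<close>)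
qed (use assms(3,4) in \<open>auto simp: dist_norm norm_minus_commute\<close>)

lemma lip_grk:
  fixes y x0 z w :: "real^'n"
  assumes s: "s > 0" and K: "K \<ge> 0" and c: "0 \<le> c" "c \<le> 1" and y: "norm y \<le> R"
    and z: "norm (z - x0) \<le> 1" and w: "norm (w - x0) \<le> 1"
  shows "norm (grk K s c z y - grk K s c w y)
     \<le> K * ((norm x0 + 1 + R)^2 / s^2 + 1 / s) * norm (z - w)"
proof (rule lip_from_deriv[OF grk_deriv_vec[OF s] _ z w])
  fix v h :: "real^'n" assume v: "norm (v - x0) \<le> 1"
  define u where "u = v - c *\<^sub>R y"
  define \<rho> where "\<rho> = norm x0 + 1 + R"
  have u: "norm u \<le> \<rho>" unfolding u_def \<rho>_def by (rule norm_u_bound[OF y c v])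
  have p0: "0 \<le> phk K s c v y" "phk K s c v y \<le> K" using phk_nonneg[OF K] phk_le[OF K s] by auto
  have ng: "norm (grk K s c v y) = phk K s c v y / s * norm u"
    using p0 s by (simp add: grk_def u_def)
  have "norm ((- (h \<bullet> grk K s c v y) / s) *\<^sub>R (v - c *\<^sub>R y) + (- phk K s c v y / s) *\<^sub>R h)
      \<le> norm ((- (h \<bullet> grk K s c v y) / s) *\<^sub>R u) + norm ((- phk K s c v y / s) *\<^sub>R h)"
    unfolding u_def by (rule norm_triangle_ineq)
  also have "norm ((- (h \<bullet> grk K s c v y) / s) *\<^sub>R u) = \<bar>h \<bullet> grk K s c v y\<bar> / s * norm u"
    using s by simp
  also have "\<bar>h \<bullet> grk K s c v y\<bar> \<le> norm h * (phk K s c v y / s * norm u)"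
    using Cauchy_Schwarz_ineq2[of h "grk K s c v y"] ng by simp
  also have "norm ((- phk K s c v y / s) *\<^sub>R h) = phk K s c v y / s * norm h"
    using p0 s by simp
  finally have "norm ((- (h \<bullet> grk K s c v y) / s) *\<^sub>R (v - c *\<^sub>R y) + (- phk K s c v y / s) *\<^sub>R h)
     \<le> phk K s c v y * ((norm u)^2 / s^2 + 1 / s) * norm h"
    using s by (simp add: divide_right_mono mult_right_mono field_simps power2_eq_square)
  also have "\<dots> \<le> K * (\<rho>^2 / s^2 + 1 / s) * norm h"
    using p0 u s by (intro mult_right_mono mult_mono add_mono divide_right_mono power_mono) auto
  finally show "norm ((- (h \<bullet> grk K s c v y) / s) *\<^sub>R (v - c *\<^sub>R y) + (- phk K s c v y / s) *\<^sub>R h)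
     \<le> K * ((norm x0 + 1 + R)\<^sup>2 / s\<^sup>2 + 1 / s) * norm h" unfolding \<rho>_def .
qed

lemma hek_alt: "hek K s c i x y = phk K s c x y *\<^sub>R
   ((((x - c *\<^sub>R y) \<bullet> axis i 1) / s^2) *\<^sub>R (x - c *\<^sub>R y) - (1/s) *\<^sub>R axis i (1::real))"
  by (simp add: hek_def inner_axis)

lemma hek_deriv_vec:
  assumes "s > 0"
  shows "((\<lambda>x. hek K s c i x y) has_derivative
     (\<lambda>h. (h \<bullet> grk K s c z y) *\<^sub>R ((((z - c *\<^sub>R y) \<bullet> axis i 1) / s^2) *\<^sub>R (z - c *\<^sub>R y) - (1/s) *\<^sub>R axis i (1::real))
        + phk K s c z y *\<^sub>R (((h \<bullet> axis i 1) / s^2) *\<^sub>R (z - c *\<^sub>R y) + (((z - c *\<^sub>R y) \<bullet> axis i 1) / s^2) *\<^sub>R h))) (at z)"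
proof -
  have s0: "s^2 \<noteq> 0" using assms by simp
  show ?thesis
  unfolding hek_alt[of K s c i _ y]
  apply (rule derivative_eq_intros refl phk_deriv[OF assms] s0)+
  apply (rule ext)
  apply (simp add: algebra_simps)
  done
qed

lemma lip_hek:
  fixes y x0 z w :: "real^'n"
  assumes s: "s > 0" and K: "K \<ge> 0" and c: "0 \<le> c" "c \<le> 1" and y: "norm y \<le> R"
    and z: "norm (z - x0) \<le> 1" and w: "norm (w - x0) \<le> 1"
  shows "norm (hek K s c i z y - hek K s c i w y)
     \<le> K * ((norm x0 + 1 + R) / s * ((norm x0 + 1 + R)^2 / s^2 + 1 / s) + 2 * (norm x0 + 1 + R) / s^2)
        * norm (z - w)"
proof (rule lip_from_deriv[OF hek_deriv_vec[OF s] _ z w])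
  fix v h :: "real^'n" assume v: "norm (v - x0) \<le> 1"
  define u where "u = v - c *\<^sub>R y"
  define \<rho> where "\<rho> = norm x0 + 1 + R"
  have u: "norm u \<le> \<rho>" unfolding u_def \<rho>_def by (rule norm_u_bound[OF y c v])
  have r0: "0 \<le> \<rho>" using u norm_ge_zero order_trans by blast
  have p0: "0 \<le> phk K s c v y" "phk K s c v y \<le> K" using phk_nonneg[OF K] phk_le[OF K s] by auto
  let ?p = "phk K s c v y"
  have ng: "norm (grk K s c v y) = ?p / s * norm u"
    using p0 s by (simp add: grk_def u_def)
  have ui: "\<bar>u \<bullet> axis i 1\<bar> \<le> norm u" using Cauchy_Schwarz_ineq2[of u "axis i (1::real)"] by simp
  have hi: "\<bar>h \<bullet> axis i 1\<bar> \<le> norm h" using Cauchy_Schwarz_ineq2[of h "axis i (1::real)"] by simp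
  have nV: "norm (((u \<bullet> axis i 1) / s^2) *\<^sub>R u - (1/s) *\<^sub>R axis i (1::real)) \<le> \<rho>^2 / s^2 + 1 / s"
  proof -
    have "norm (((u \<bullet> axis i 1) / s^2) *\<^sub>R u - (1/s) *\<^sub>R axis i (1::real))
       \<le> norm (((u \<bullet> axis i 1) / s^2) *\<^sub>R u) + norm ((1/s) *\<^sub>R axis i (1::real))"
      by (rule norm_triangle_ineq4)
    also have "norm (((u \<bullet> axis i 1) / s^2) *\<^sub>R u) = \<bar>u \<bullet> axis i 1\<bar> / s^2 * norm u" by simp
    also have "\<dots> \<le> \<rho> / s^2 * \<rho>"
      using ui u s by (intro mult_mono divide_right_mono) auto
    also have "norm ((1/s) *\<^sub>R axis i (1::real)) = 1 / s" using s by simp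
    finally show ?thesis by (simp add: power2_eq_square)
  qed
  have "norm ((h \<bullet> grk K s c v y) *\<^sub>R (((u \<bullet> axis i 1) / s^2) *\<^sub>R u - (1/s) *\<^sub>R axis i (1::real))
        + ?p *\<^sub>R (((h \<bullet> axis i 1) / s^2) *\<^sub>R u + ((u \<bullet> axis i 1) / s^2) *\<^sub>R h))
     \<le> norm ((h \<bullet> grk K s c v y) *\<^sub>R (((u \<bullet> axis i 1) / s^2) *\<^sub>R u - (1/s) *\<^sub>R axis i (1::real)))
       + norm (?p *\<^sub>R (((h \<bullet> axis i 1) / s^2) *\<^sub>R u + ((u \<bullet> axis i 1) / s^2) *\<^sub>R h))"
    by (rule norm_triangle_ineq)
  also have "norm ((h \<bullet> grk K s c v y) *\<^sub>R (((u \<bullet> axis i 1) / s^2) *\<^sub>R u - (1/s) *\<^sub>R axis i (1::real)))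
     \<le> (norm h * (K / s * \<rho>)) * (\<rho>^2 / s^2 + 1 / s)"
  proof -
    have "\<bar>h \<bullet> grk K s c v y\<bar> \<le> norm h * (?p / s * norm u)"
      using Cauchy_Schwarz_ineq2[of h "grk K s c v y"] ng by simp
    also have "\<dots> \<le> norm h * (K / s * \<rho>)"
      using p0 u s by (intro mult_left_mono mult_mono divide_right_mono) auto
    finally have A: "\<bar>h \<bullet> grk K s c v y\<bar> \<le> norm h * (K / s * \<rho>)" .
    have "0 \<le> norm h * (K / s * \<rho>)" using K s r0 by simp
    thus ?thesis using mult_mono[OF A nV] by simp
  qed
  also have "norm (?p *\<^sub>R (((h \<bullet> axis i 1) / s^2) *\<^sub>R u + ((u \<bullet> axis i 1) / s^2) *\<^sub>R h))
      \<le> K * (2 * \<rho> / s^2 * norm h)"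
  proof -
    have "norm (((h \<bullet> axis i 1) / s^2) *\<^sub>R u + ((u \<bullet> axis i 1) / s^2) *\<^sub>R h)
        \<le> norm (((h \<bullet> axis i 1) / s^2) *\<^sub>R u) + norm (((u \<bullet> axis i 1) / s^2) *\<^sub>R h)"
      by (rule norm_triangle_ineq)
    also have "norm (((h \<bullet> axis i 1) / s^2) *\<^sub>R u) \<le> norm h / s^2 * \<rho>"
      using hi u s by (simp add: mult_mono divide_right_mono)
    also have "norm (((u \<bullet> axis i 1) / s^2) *\<^sub>R h) \<le> \<rho> / s^2 * norm h"
      using ui u s by (simp add: mult_mono divide_right_mono order_trans[OF ui u])
    finally have B: "norm (((h \<bullet> axis i 1) / s^2) *\<^sub>R u + ((u \<bullet> axis i 1) / s^2) *\<^sub>R h) \<le> 2 * \<rho> / s^2 * norm h"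
      by (simp add: field_simps)
    have "?p * norm (((h \<bullet> axis i 1) / s^2) *\<^sub>R u + ((u \<bullet> axis i 1) / s^2) *\<^sub>R h) \<le> K * (2 * \<rho> / s^2 * norm h)"
      by (rule mult_mono[OF p0(2) B]) (use K in auto)
    thus ?thesis using p0(1) by simp
  qed
  finally show "norm ((h \<bullet> grk K s c v y) *\<^sub>R ((((v - c *\<^sub>R y) \<bullet> axis i 1) / s^2) *\<^sub>R (v - c *\<^sub>R y) - (1/s) *\<^sub>R axis i (1::real))
        + phk K s c v y *\<^sub>R (((h \<bullet> axis i 1) / s^2) *\<^sub>R (v - c *\<^sub>R y) + (((v - c *\<^sub>R y) \<bullet> axis i 1) / s^2) *\<^sub>R h))
     \<le> K * ((norm x0 + 1 + R) / s * ((norm x0 + 1 + R)^2 / s^2 + 1 / s) + 2 * (norm x0 + 1 + R) / s^2) * norm h"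
    unfolding u_def[symmetric] \<rho>_def[symmetric] by (simp add: algebra_simps)
qed

locale gset =
  fixes M :: "(real^'n) measure" and K s c R :: real
  assumes M: "prob_space M" and Msets: "sets M = sets borel"
    and AEM: "AE y in M. norm y \<le> R"
    and s: "s > 0" and K: "K > 0" and c: "0 \<le> c" "c \<le> 1" and R: "R \<ge> 0"
begin

definition "P x = (\<integral>y. phk K s c x y \<partial>M)"
definition "GP x = (\<integral>y. grk K s c x y \<partial>M)"
definition "HP i x = (\<integral>y. hek K s c i x y \<partial>M)"

lemma meas_borel: "f \<in> borel_measurable borel \<Longrightarrow> f \<in> borel_measurable M"
  using measurable_cong_sets[OF Msets refl] by blast

lemma meas_phk: "phk K s c x \<in> borel_measurable M"
  unfolding phk_def by (intro meas_borel borel_measurable_continuous_onI continuous_intros) (use s in auto)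

lemma meas_grk: "grk K s c x \<in> borel_measurable M"
  unfolding grk_def phk_def by (intro meas_borel borel_measurable_continuous_onI continuous_intros) (use s in auto)

lemma meas_grk_i: "(\<lambda>y. grk K s c x y $ i) \<in> borel_measurable M"
  unfolding grk_def phk_def by (intro meas_borel borel_measurable_continuous_onI continuous_intros) (use s in auto)

lemma meas_hek: "hek K s c i x \<in> borel_measurable M"
  unfolding hek_def phk_def by (intro meas_borel borel_measurable_continuous_onI continuous_intros) (use s in auto)

lemma K0: "K \<ge> 0" using K by simp
lemma pb: "0 \<le> phk K s c x y" "phk K s c x y \<le> K"
  using phk_nonneg[OF K0] phk_le[OF K0 s] by auto
lemma pabs[simp]: "\<bar>phk K s c x y\<bar> = phk K s c x y" by (rule abs_of_nonneg[OF pb(1)])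
lemma fm: "finite_measure M" using M prob_space.axioms(1) by blast

lemma int_phk: "integrable M (phk K s c x)"
  by (rule finite_measure.integrable_const_bound[OF fm, where B=K]) (use pb meas_phk in \<open>auto intro!: always_eventually simp: abs_of_nonneg\<close>)

lemma norm_grk: "norm (grk K s c x y) = phk K s c x y / s * norm (x - c *\<^sub>R y)"
  using pb s by (simp add: grk_def abs_of_nonneg)

lemma norm_grk_le:
  assumes "norm y \<le> R" "norm (z - x0) \<le> 1"
  shows "norm (grk K s c z y) \<le> K / s * (norm x0 + 1 + R)"
  unfolding norm_grk using pb norm_u_bound[OF assms(1) c assms(2)] s K
  by (intro mult_mono divide_right_mono) auto

lemma P_deriv: "(P has_derivative (\<lambda>h. h \<bullet> GP x0)) (at x0)"
  unfolding P_def[abs_def] GP_def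
proof (rule diff_under_integral[OF M AEM meas_phk meas_grk phk_deriv[OF s]])
  fix y z :: "real^'n" assume y: "norm y \<le> R" and z: "norm (z - x0) \<le> 1"
  show "\<bar>phk K s c z y\<bar> \<le> K + K / s * (norm x0 + 1 + R) \<and>
        norm (grk K s c z y) \<le> K + K / s * (norm x0 + 1 + R)"
  proof -
    have q: "0 \<le> K / s * (norm x0 + 1 + R)" using K s R by simp
    show ?thesis unfolding pabs using q pb(2)[of z y] norm_grk_le[OF y z] K by linarith
  qed
next
  fix y z w :: "real^'n" assume "norm y \<le> R" "norm (z - x0) \<le> 1" "norm (w - x0) \<le> 1"
  thus "norm (grk K s c z y - grk K s c w y) \<le> K * ((norm x0 + 1 + R)^2 / s^2 + 1 / s) * norm (z - w)"
    by (rule lip_grk[OF s K0 c])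
next
  show "0 \<le> K * ((norm x0 + 1 + R)^2 / s^2 + 1 / s)" using K s by simp
qed

lemma int_grk: "integrable M (grk K s c x)"
  by (rule finite_measure.integrable_const_bound[OF fm, where B="K / s * (norm x + 1 + R)"])
     (use AEM norm_grk_le[of _ x x] meas_grk in \<open>auto elim: AE_mp\<close>)

lemma GP_comp: "GP x $ i = (\<integral>y. grk K s c x y $ i \<partial>M)"
  unfolding GP_def by (rule integral_bounded_linear[OF bounded_linear_vec_nth int_grk, symmetric])

lemma V_bound:
  fixes u :: "real^'n"
  assumes "norm u \<le> r"
  shows "norm (((u \<bullet> axis i 1) / s^2) *\<^sub>R u - (1/s) *\<^sub>R axis i (1::real)) \<le> r^2 / s^2 + 1 / s"
proof -
  have ui: "\<bar>u \<bullet> axis i 1\<bar> \<le> norm u" using Cauchy_Schwarz_ineq2[of u "axis i (1::real)"] by simp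
  have "norm (((u \<bullet> axis i 1) / s^2) *\<^sub>R u - (1/s) *\<^sub>R axis i (1::real))
     \<le> norm (((u \<bullet> axis i 1) / s^2) *\<^sub>R u) + norm ((1/s) *\<^sub>R axis i (1::real))"
    by (rule norm_triangle_ineq4)
  also have "norm (((u \<bullet> axis i 1) / s^2) *\<^sub>R u) = \<bar>u \<bullet> axis i 1\<bar> / s^2 * norm u" by simp
  also have "\<dots> \<le> r / s^2 * r"
    using ui assms s by (intro mult_mono divide_right_mono) auto
  also have "norm ((1/s) *\<^sub>R axis i (1::real)) = 1 / s" using s by simp
  finally show ?thesis by (simp add: power2_eq_square)
qed

lemma norm_hek_le:
  fixes x y :: "real^'n"
  assumes "norm (x - c *\<^sub>R y) \<le> r"
  shows "norm (hek K s c i x y) \<le> phk K s c x y * (r^2 / s^2 + 1 / s)"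
  unfolding hek_alt using V_bound[OF assms, of i] pb[of x y] by (simp add: mult_left_mono)

lemma GP_deriv: "((\<lambda>x. GP x $ i) has_derivative (\<lambda>h. h \<bullet> HP i x0)) (at x0)"
  unfolding GP_comp HP_def
proof (rule diff_under_integral[OF M AEM meas_grk_i meas_hek grk_deriv[OF s]])
  fix y z :: "real^'n" assume y: "norm y \<le> R" and z: "norm (z - x0) \<le> 1"
  let ?r = "norm x0 + 1 + R"
  have u: "norm (z - c *\<^sub>R y) \<le> ?r" by (rule norm_u_bound[OF y c z])
  have a: "\<bar>grk K s c z y $ i\<bar> \<le> K / s * ?r"
    using component_le_norm_cart[of "grk K s c z y" i] norm_grk_le[OF y z] by linarith
  have b: "norm (hek K s c i z y) \<le> K * (?r^2 / s^2 + 1 / s)"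
    using norm_hek_le[OF u, of i] pb[of z y] s by (smt (verit) mult_right_mono zero_le_divide_iff zero_le_power2 divide_pos_pos)
  have q1: "0 \<le> K / s * ?r" using K s R by simp
  have q2: "0 \<le> K * (?r^2 / s^2 + 1 / s)" using K s by simp
  show "\<bar>grk K s c z y $ i\<bar> \<le> K / s * ?r + K * (?r^2 / s^2 + 1 / s) \<and>
        norm (hek K s c i z y) \<le> K / s * ?r + K * (?r^2 / s^2 + 1 / s)"
    using a b q1 q2 by linarith
next
  fix y z w :: "real^'n" assume "norm y \<le> R" "norm (z - x0) \<le> 1" "norm (w - x0) \<le> 1"
  thus "norm (hek K s c i z y - hek K s c i w y) \<le> K * ((norm x0 + 1 + R) / s * ((norm x0 + 1 + R)^2 / s^2 + 1 / s) + 2 * (norm x0 + 1 + R) / s^2) * norm (z - w)"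
    by (rule lip_hek[OF s K0 c])
next
  show "0 \<le> K * ((norm x0 + 1 + R) / s * ((norm x0 + 1 + R)^2 / s^2 + 1 / s) + 2 * (norm x0 + 1 + R) / s^2)"
    using K s R by simp
qed

lemma u_bound0: fixes x y :: "real^'n" shows "norm y \<le> R \<Longrightarrow> norm (x - c *\<^sub>R y) \<le> norm x + R"
proof -
  assume y: "norm y \<le> R"
  have "norm (x - c *\<^sub>R y) \<le> norm x + norm (c *\<^sub>R y)" by (rule norm_triangle_ineq4)
  also have "norm (c *\<^sub>R y) \<le> norm y" using c by (simp add: mult_left_le_one_le)
  finally show ?thesis using y by simp
qed

lemma P_lower: "P x \<ge> K * exp (- (1 / (2 * s)) * (norm x + R)^2)"
proof -
  have "(\<integral>y. K * exp (- (1 / (2 * s)) * (norm x + R)^2) \<partial>M) \<le> P x"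
    unfolding P_def
  proof (rule integral_mono_AE[OF _ int_phk])
    show "AE y in M. K * exp (- (1 / (2 * s)) * (norm x + R)\<^sup>2) \<le> phk K s c x y"
      using AEM
    proof eventually_elim
      fix y :: "real^'n" assume y: "norm y \<le> R"
      have "(x - c *\<^sub>R y) \<bullet> (x - c *\<^sub>R y) = (norm (x - c *\<^sub>R y))^2" by (simp add: power2_norm_eq_inner)
      also have "\<dots> \<le> (norm x + R)^2" using u_bound0[OF y] by (intro power_mono) auto
      finally show "K * exp (- (1 / (2 * s)) * (norm x + R)\<^sup>2) \<le> phk K s c x y"
        unfolding phk_def using s K by (intro mult_left_mono) (auto simp: mult_le_cancel_left_pos divide_right_mono)
    qed
  qed (simp add: finite_measure.integrable_const[OF fm])
  thus ?thesis using M by (simp add: prob_space.prob_space)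
qed

lemma P_pos: "P x > 0"
  using P_lower[of x] K by (smt (verit) exp_gt_zero mult_pos_pos)

lemma P_le: "P x \<le> K"
proof -
  have "P x \<le> (\<integral>y. K \<partial>M)" unfolding P_def
    by (rule integral_mono_AE[OF int_phk]) (use pb finite_measure.integrable_const[OF fm] in \<open>auto intro!: always_eventually\<close>)
  thus ?thesis using M by (simp add: prob_space.prob_space)
qed

lemma int_bound_P:
  assumes "integrable M f" "AE y in M. \<bar>f y\<bar> \<le> phk K s c x y * a"
  shows "\<bar>\<integral>y. f y \<partial>M\<bar> \<le> P x * a"
proof -
  have "\<bar>\<integral>y. f y \<partial>M\<bar> \<le> (\<integral>y. \<bar>f y\<bar> \<partial>M)"
    using integral_norm_bound[of M f] by simp
  also have "\<dots> \<le> (\<integral>y. phk K s c x y * a \<partial>M)"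
    by (rule integral_mono_AE) (use assms int_phk in auto)
  also have "\<dots> = P x * a" unfolding P_def by simp
  finally show ?thesis .
qed

lemma GP_bound: "\<bar>GP x $ i\<bar> \<le> P x * ((norm x + R) / s)"
  unfolding GP_comp
proof (rule int_bound_P)
  show "integrable M (\<lambda>y. grk K s c x y $ i)"
    using integrable_bounded_linear[OF bounded_linear_vec_nth int_grk] by simp
  show "AE y in M. \<bar>grk K s c x y $ i\<bar> \<le> phk K s c x y * ((norm x + R) / s)"
    using AEM
  proof eventually_elim
    fix y :: "real^'n" assume y: "norm y \<le> R"
    have "\<bar>grk K s c x y $ i\<bar> \<le> phk K s c x y / s * norm (x - c *\<^sub>R y)"
      using component_le_norm_cart[of "grk K s c x y" i] norm_grk[of x y] by simp
    also have "\<dots> \<le> phk K s c x y / s * (norm x + R)"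
      using u_bound0[OF y] divide_nonneg_pos[OF pb(1) s] by (intro mult_left_mono) auto
    finally show "\<bar>grk K s c x y $ i\<bar> \<le> phk K s c x y * ((norm x + R) / s)" by simp
  qed
qed

lemma int_hek: "integrable M (hek K s c i x)"
proof (rule finite_measure.integrable_const_bound[OF fm, where B="K * ((norm x + R)^2 / s^2 + 1 / s)"])
  show "AE y in M. norm (hek K s c i x y) \<le> K * ((norm x + R)\<^sup>2 / s\<^sup>2 + 1 / s)"
    using AEM
  proof eventually_elim
    fix y :: "real^'n" assume y: "norm y \<le> R"
    have "norm (hek K s c i x y) \<le> phk K s c x y * ((norm x + R)^2 / s^2 + 1 / s)"
      by (rule norm_hek_le[OF u_bound0[OF y]])
    also have "\<dots> \<le> K * ((norm x + R)^2 / s^2 + 1 / s)"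
      using pb s by (intro mult_right_mono) auto
    finally show "norm (hek K s c i x y) \<le> K * ((norm x + R)\<^sup>2 / s\<^sup>2 + 1 / s)" .
  qed
qed (rule meas_hek)

lemma HP_bound: "\<bar>HP i x $ j\<bar> \<le> P x * ((norm x + R)^2 / s^2 + 1 / s)"
proof -
  have eq: "HP i x $ j = (\<integral>y. hek K s c i x y $ j \<partial>M)"
    unfolding HP_def by (rule integral_bounded_linear[OF bounded_linear_vec_nth int_hek, symmetric])
  show ?thesis unfolding eq
  proof (rule int_bound_P)
    show "integrable M (\<lambda>y. hek K s c i x y $ j)"
      using integrable_bounded_linear[OF bounded_linear_vec_nth int_hek] by simp
    show "AE y in M. \<bar>hek K s c i x y $ j\<bar> \<le> phk K s c x y * ((norm x + R)^2 / s^2 + 1 / s)"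
      using AEM
    proof eventually_elim
      fix y :: "real^'n" assume y: "norm y \<le> R"
      show "\<bar>hek K s c i x y $ j\<bar> \<le> phk K s c x y * ((norm x + R)^2 / s^2 + 1 / s)"
        using component_le_norm_cart[of "hek K s c i x y" j] norm_hek_le[OF u_bound0[OF y, of x], of i] by linarith
    qed
  qed
qed

end

lemma jac_aux:
  fixes s p a b h :: real
  assumes "s > 0" "p > 0"
  shows "\<bar>(-s) * (- a / p^2 * b + (1 / p) * h)\<bar> \<le> s * ((\<bar>a\<bar> / p) * (\<bar>b\<bar> / p) + \<bar>h\<bar> / p)"
proof -
  have e: "(-s) * (- a / p^2 * b + (1 / p) * h) = - s * ((-(a/p)*(b/p)) + h/p)"
    using assms by (simp add: field_simps power2_eq_square)
  have "\<bar>(-(a/p)*(b/p)) + h/p\<bar> \<le> \<bar>a/p\<bar> * \<bar>b/p\<bar> + \<bar>h/p\<bar>"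
    by (metis abs_minus_cancel abs_mult abs_triangle_ineq)
  hence "\<bar>(-(a/p)*(b/p)) + h/p\<bar> \<le> (\<bar>a\<bar> / p) * (\<bar>b\<bar> / p) + \<bar>h\<bar> / p"
    using assms by simp
  thus ?thesis unfolding e using assms by (simp add: abs_mult)
qed

context gset begin

lemma lnP_deriv: "((\<lambda>z. ln (P z)) has_derivative (\<lambda>h. (1 / P x) * (h \<bullet> GP x))) (at x)"
proof -
  have "((\<lambda>z. ln (P z)) has_derivative (\<lambda>h. inverse (P x) * (h \<bullet> GP x))) (at x)"
    by (rule has_derivative_compose[OF P_deriv, of ln "\<lambda>h. inverse (P x) * h", simplified o_def])
       (use DERIV_ln[OF P_pos[of x]] in \<open>simp add: has_field_derivative_def mult.commute[of _ "inverse (P x)"]\<close>)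
  thus ?thesis by (simp add: divide_inverse)
qed

lemma score_eq: "(\<chi> i. frechet_derivative (\<lambda>z. ln (P z)) (at x) (axis i 1)) = (1 / P x) *\<^sub>R GP x"
  unfolding frechet_derivative_at[OF lnP_deriv, symmetric]
  by (simp add: vec_eq_iff inner_axis inner_commute[of "axis _ 1"])

lemma GP_vderiv: "(GP has_derivative (\<lambda>h. \<chi> i. h \<bullet> HP i x)) (at x)"
proof -
  have "\<forall>b\<in>Basis. ((\<lambda>z. GP z \<bullet> b) has_derivative (\<lambda>h. (\<chi> i. h \<bullet> HP i x) \<bullet> b)) (at x)"
  proof
    fix b :: "real^'n" assume "b \<in> Basis"
    then obtain j where b: "b = axis j 1" by (auto simp: Basis_vec_def)
    show "((\<lambda>z. GP z \<bullet> b) has_derivative (\<lambda>h. (\<chi> i. h \<bullet> HP i x) \<bullet> b)) (at x)"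
      unfolding b inner_axis using GP_deriv[of j x] by simp
  qed
  thus ?thesis using has_derivative_componentwise_within[of GP _ x UNIV] by simp
qed

lemma gf_deriv: "((\<lambda>x. (-s) *\<^sub>R ((1 / P x) *\<^sub>R GP x)) has_derivative
   (\<lambda>h. (-s) *\<^sub>R ((- (h \<bullet> GP x) / (P x)^2) *\<^sub>R GP x + (1 / P x) *\<^sub>R (\<chi> i. h \<bullet> HP i x)))) (at x)"
proof -
  have p: "P x \<noteq> 0" using P_pos[of x] by simp
  show ?thesis
    apply (rule derivative_eq_intros refl GP_vderiv P_deriv p)+
    apply (rule ext)
    using p apply (simp add: power2_eq_square algebra_simps divide_simps)
    done
qed

lemma Jac_entry: "matrix (frechet_derivative (\<lambda>x. (-s) *\<^sub>R ((1 / P x) *\<^sub>R GP x)) (at x)) $ i $ j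
   = (-s) * (- (GP x $ j) / (P x)^2 * GP x $ i + (1 / P x) * HP i x $ j)"
  unfolding frechet_derivative_at[OF gf_deriv, symmetric]
  by (simp add: matrix_def inner_axis inner_commute[of "axis _ 1"])

lemma Jac_bound: "\<bar>matrix (frechet_derivative (\<lambda>x. (-s) *\<^sub>R ((1 / P x) *\<^sub>R GP x)) (at x)) $ i $ j\<bar>
   \<le> 2 * (norm x + R)^2 / s + 1"
proof -
  define \<rho> where "\<rho> = norm x + R"
  have p: "P x > 0" by (rule P_pos)
  have a: "\<bar>GP x $ j\<bar> / P x \<le> \<rho> / s"
    unfolding pos_divide_le_eq[OF p] using GP_bound[of x j] unfolding \<rho>_def by (simp add: mult.commute)
  have b: "\<bar>GP x $ i\<bar> / P x \<le> \<rho> / s"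
    unfolding pos_divide_le_eq[OF p] using GP_bound[of x i] unfolding \<rho>_def by (simp add: mult.commute)
  have c: "\<bar>HP i x $ j\<bar> / P x \<le> \<rho>^2 / s^2 + 1 / s"
    unfolding pos_divide_le_eq[OF p] using HP_bound[of i x j] unfolding \<rho>_def by (simp add: mult.commute)
  have "\<bar>(-s) * (- (GP x $ j) / (P x)^2 * GP x $ i + (1 / P x) * HP i x $ j)\<bar>
     \<le> s * ((\<bar>GP x $ j\<bar> / P x) * (\<bar>GP x $ i\<bar> / P x) + \<bar>HP i x $ j\<bar> / P x)"
    by (rule jac_aux[OF s p])
  also have "\<dots> \<le> s * ((\<rho> / s) * (\<rho> / s) + (\<rho>^2 / s^2 + 1 / s))"
    using a b c s p R by (intro mult_left_mono add_mono mult_mono) (auto simp: \<rho>_def)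
  also have "\<dots> = 2 * \<rho>^2 / s + 1" using s by (simp add: field_simps power2_eq_square)
  finally show ?thesis unfolding Jac_entry \<rho>_def .
qed

lemma score_norm: "norm ((1 / P x) *\<^sub>R GP x) \<le> real CARD('n) * ((norm x + R) / s)"
proof -
  have p: "P x > 0" by (rule P_pos)
  have "norm ((1 / P x) *\<^sub>R GP x) \<le> (\<Sum>i\<in>UNIV. \<bar>((1 / P x) *\<^sub>R GP x) $ i\<bar>)" by (rule norm_le_l1_cart)
  also have "\<dots> \<le> (\<Sum>i\<in>(UNIV::'n set). (norm x + R) / s)"
  proof (rule sum_mono)
    fix i
    have "\<bar>GP x $ i\<bar> / P x \<le> (norm x + R) / s"
      unfolding pos_divide_le_eq[OF p] using GP_bound[of x i] by (simp add: mult.commute)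
    thus "\<bar>((1 / P x) *\<^sub>R GP x) $ i\<bar> \<le> (norm x + R) / s" using p by simp
  qed
  also have "\<dots> = real CARD('n) * ((norm x + R) / s)" by simp
  finally show ?thesis .
qed

end

lemma scaleR_mvmul: "((k::real) *\<^sub>R (A::real^'n^'m)) *v w = k *\<^sub>R (A *v w)"
  by (simp add: vec_eq_iff matrix_vector_mult_def sum_distrib_left algebra_simps)

lemma det_bound:
  fixes A :: "real^'n^'n"
  assumes "\<And>i j. \<bar>A $ i $ j\<bar> \<le> m"
  shows "\<bar>det A\<bar> \<le> fact CARD('n) * m ^ CARD('n)"
proof -
  have m: "0 \<le> m" using assms[of undefined undefined] by linarith
  have "\<bar>det A\<bar> \<le> (\<Sum>p\<in>{p. p permutes (UNIV::'n set)}. \<bar>of_int (sign p) * (\<Prod>i\<in>UNIV. A $ i $ p i)\<bar>)"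
    unfolding det_def by (rule sum_abs)
  also have "\<dots> \<le> (\<Sum>p\<in>{p. p permutes (UNIV::'n set)}. m ^ CARD('n))"
  proof (rule sum_mono)
    fix p
    have "\<bar>of_int (sign p) * (\<Prod>i\<in>UNIV. A $ i $ p i)\<bar> = (\<Prod>i\<in>(UNIV::'n set). \<bar>A $ i $ p i\<bar>)"
      by (simp add: abs_mult sign_def abs_prod)
    also have "\<dots> \<le> (\<Prod>i\<in>(UNIV::'n set). m)"
      by (rule prod_mono) (use assms in auto)
    finally show "\<bar>of_int (sign p) * (\<Prod>i\<in>UNIV. A $ i $ p i)\<bar> \<le> m ^ CARD('n)" by simp
  qed
  also have "\<dots> = fact CARD('n) * m ^ CARD('n)"
    by (simp add: card_permutations)
  finally show ?thesis .
qed

lemma quad_bound: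
  fixes A :: "real^'n^'n" and v :: "real^'n"
  assumes k: "k > 0" and d: "det (k *\<^sub>R (A ** transpose A + mat 1)) \<noteq> 0"
  shows "v \<bullet> (matrix_inv (k *\<^sub>R (A ** transpose A + mat 1)) *v v) \<le> (norm v)^2 / k"
proof -
  define S where "S = k *\<^sub>R (A ** transpose A + mat 1)"
  have inv: "invertible S" using d invertible_det_nz unfolding S_def by blast
  have SS: "S ** matrix_inv S = mat 1"
    using inv someI_ex[of "\<lambda>A'. S ** A' = mat 1 \<and> A' ** S = mat 1"]
    unfolding invertible_def matrix_inv_def by blast
  define w where "w = matrix_inv S *v v"
  have Sw: "S *v w = v" unfolding w_def by (simp add: matrix_vector_mul_assoc SS)
  have "v \<bullet> w = (S *v w) \<bullet> w" using Sw by simp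
  also have "\<dots> = k * ((transpose A *v w) \<bullet> (transpose A *v w) + w \<bullet> w)"
  proof -
    have "S *v w = k *\<^sub>R (A *v (transpose A *v w) + w)"
      unfolding S_def scaleR_mvmul matrix_vector_mult_add_rdistrib matrix_vector_mul_lid
        matrix_vector_mul_assoc[symmetric] ..
    moreover have "(A *v u) \<bullet> w = u \<bullet> (transpose A *v w)" for u
      by (metis dot_lmul_matrix inner_commute vector_transpose_matrix)
    ultimately show ?thesis by (simp add: inner_add_left inner_add_right inner_commute)
  qed
  finally have vw: "v \<bullet> w = k * ((norm (transpose A *v w))^2 + (norm w)^2)"
    by (simp add: power2_norm_eq_inner)
  hence ge: "v \<bullet> w \<ge> k * (norm w)^2" using k by (simp add: mult_left_mono)
  have le: "v \<bullet> w \<le> norm v * norm w" by (rule Cauchy_Schwarz_ineq2[THEN order_trans[OF abs_ge_self]])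
  have "k * norm w \<le> norm v"
  proof (cases "w = 0")
    case True thus ?thesis using k by simp
  next
    case False
    hence "norm w > 0" by simp
    moreover have "k * norm w * norm w \<le> norm v * norm w" using ge le by (simp add: power2_eq_square mult.assoc)
    ultimately show ?thesis by simp
  qed
  hence "norm w \<le> norm v / k" using k by (simp add: field_simps)
  hence "norm v * norm w \<le> norm v * (norm v / k)" by (intro mult_left_mono) auto
  thus ?thesis using le unfolding w_def S_def by (simp add: power2_eq_square)
qed

lemma Sigma_entry_bound:
  fixes A :: "real^'n^'n"
  assumes k: "0 \<le> k" and A: "\<And>i j. \<bar>A $ i $ j\<bar> \<le> mA"
  shows "\<bar>(k *\<^sub>R (A ** transpose A + mat 1)) $ i $ j\<bar> \<le> k * (real CARD('n) * mA^2 + 1)"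
proof -
  have "\<bar>(A ** transpose A) $ i $ j\<bar> \<le> (\<Sum>l\<in>(UNIV::'n set). \<bar>A $ i $ l * A $ j $ l\<bar>)"
    by (simp add: matrix_matrix_mult_def transpose_def sum_abs)
  also have "\<dots> \<le> (\<Sum>l\<in>(UNIV::'n set). mA^2)"
    by (rule sum_mono) (use A in \<open>auto simp: abs_mult power2_eq_square intro: mult_mono order_trans[OF abs_ge_zero]\<close>)
  finally have a: "\<bar>(A ** transpose A) $ i $ j\<bar> \<le> real CARD('n) * mA^2" by simp
  have b: "\<bar>(mat 1 :: real^'n^'n) $ i $ j\<bar> \<le> 1" by (simp add: mat_def)
  have "\<bar>(A ** transpose A + mat 1) $ i $ j\<bar> \<le> real CARD('n) * mA^2 + 1"
    using a b abs_triangle_ineq[of "(A ** transpose A) $ i $ j" "(mat 1 :: real^'n^'n) $ i $ j"] by simp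
  thus ?thesis using k by (simp add: abs_mult mult_left_mono)
qed

lemma lr_beta_facts:
  fixes T :: nat and c0 c1 :: real
  assumes T: "2 \<le> T" and c0: "1 \<le> c0" and c1: "0 \<le> c1" and l1: "1 \<le> c1 * ln (real T)"
    and l2: "c1 * ln (real T) / real T \<le> 1/2" and k: "1 \<le> k"
  shows "0 < lr_beta T c0 c1 k" "lr_beta T c0 c1 k \<le> 1/2"
    and "2 \<le> k \<Longrightarrow> real T powr (- c0) / real T \<le> lr_beta T c0 c1 k"
proof -
  have T0: "real T \<ge> 2" using T by simp
  have p0: "0 < real T powr (- c0)" using T0 by simp
  have p1: "real T powr (- c0) \<le> 1/2"
  proof -
    have "real T powr (- c0) \<le> real T powr (-1)" using T0 c0 by (intro powr_mono) auto
    also have "\<dots> = 1 / real T" using T0 by (simp add: powr_minus divide_inverse)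
    also have "\<dots> \<le> 1/2" using T0 by simp
    finally show ?thesis .
  qed
  have p2: "real T powr (- c0) \<le> 1" using p1 by simp
  define q where "q = c1 * ln (real T) / real T"
  have q0: "0 < q" using l1 T0 unfolding q_def by simp
  have mn: "real T powr (- c0) \<le> min (real T powr (- c0) * (1 + q) ^ k) 1"
  proof -
    have "1 \<le> (1 + q) ^ k" using q0 by (simp add: one_le_power)
    hence "real T powr (- c0) * 1 \<le> real T powr (- c0) * (1 + q) ^ k" using p0 by (intro mult_left_mono) auto
    thus ?thesis using p2 by simp
  qed
  have mn1: "min (real T powr (- c0) * (1 + q) ^ k) 1 \<le> 1" by simp
  show "0 < lr_beta T c0 c1 k"
    using p0 q0 mn unfolding lr_beta_def q_def[symmetric] by (auto intro!: mult_pos_pos)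
  show "lr_beta T c0 c1 k \<le> 1/2"
  proof (cases "k \<le> 1")
    case True thus ?thesis using p1 unfolding lr_beta_def by simp
  next
    case False
    have "q * min (real T powr (- c0) * (1 + q) ^ k) 1 \<le> q * 1" using q0 mn1 by (intro mult_left_mono) auto
    moreover have "lr_beta T c0 c1 k = q * min (real T powr (- c0) * (1 + q) ^ k) 1"
      using False unfolding lr_beta_def q_def by simp
    moreover have "q \<le> 1/2" using l2 q_def by simp
    ultimately show ?thesis by linarith
  qed
  assume k2: "2 \<le> k"
  have "real T powr (- c0) / real T \<le> q * real T powr (- c0)"
  proof -
    have "real T powr (- c0) / real T = (1 / real T) * real T powr (- c0)" by simp
    also have "\<dots> \<le> q * real T powr (- c0)" using l1 T0 p0 unfolding q_def
      by (intro mult_right_mono divide_right_mono) auto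
    finally show ?thesis .
  qed
  also have "\<dots> \<le> q * min (real T powr (- c0) * (1 + q) ^ k) 1" using q0 mn by (intro mult_left_mono) auto
  finally show "real T powr (- c0) / real T \<le> lr_beta T c0 c1 k"
    using k2 unfolding lr_beta_def q_def[symmetric] by simp
qed

lemma lr_alphabar_facts:
  fixes T :: nat and c0 c1 :: real
  assumes T: "2 \<le> T" and c0: "1 \<le> c0" and c1: "0 \<le> c1" and l1: "1 \<le> c1 * ln (real T)"
    and l2: "c1 * ln (real T) / real T \<le> 1/2" and t: "1 \<le> t"
  shows "0 < lr_alphabar T c0 c1 t" "lr_alphabar T c0 c1 t \<le> lr_alpha T c0 c1 t"
    "lr_alphabar T c0 c1 t \<le> 1 - real T powr (- c0)"
proof -
  have a: "1/2 \<le> lr_alpha T c0 c1 k \<and> lr_alpha T c0 c1 k < 1" if "1 \<le> k" for k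
    using lr_beta_facts[OF T c0 c1 l1 l2 that] unfolding lr_alpha_def by auto
  show "0 < lr_alphabar T c0 c1 t"
  proof -
    have pos: "\<And>k. k \<in> {1..t} \<Longrightarrow> 0 < lr_alpha T c0 c1 k" using a by force
    show ?thesis unfolding lr_alphabar_def using pos by (intro prod_pos) auto
  qed
  have le1: "(\<Prod>k\<in>A. lr_alpha T c0 c1 k) \<le> 1" if "A \<subseteq> {1..t}" for A
  proof -
    have "\<And>k. k \<in> A \<Longrightarrow> 0 \<le> lr_alpha T c0 c1 k \<and> lr_alpha T c0 c1 k \<le> 1"
      using that a by (meson atLeastAtMost_iff dual_order.trans less_eq_real_def subsetD zero_le_divide_1_iff zero_le_numeral)
    thus ?thesis by (intro prod_le_1) auto
  qed
  have nn: "0 \<le> lr_alpha T c0 c1 k" if "k \<in> {1..t}" for k using a[of k] that by auto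
  have split: "lr_alphabar T c0 c1 t = lr_alpha T c0 c1 j * (\<Prod>k\<in>{1..t} - {j}. lr_alpha T c0 c1 k)"
    if "j \<in> {1..t}" for j
    unfolding lr_alphabar_def using that by (simp add: prod.remove)
  have "lr_alphabar T c0 c1 t \<le> lr_alpha T c0 c1 j" if "j \<in> {1..t}" for j
  proof -
    have "lr_alpha T c0 c1 j * (\<Prod>k\<in>{1..t} - {j}. lr_alpha T c0 c1 k) \<le> lr_alpha T c0 c1 j * 1"
      using le1[of "{1..t} - {j}"] nn[OF that] by (intro mult_left_mono) auto
    thus ?thesis using split[OF that] by simp
  qed
  from this[of t] this[of 1] t
  show "lr_alphabar T c0 c1 t \<le> lr_alpha T c0 c1 t" "lr_alphabar T c0 c1 t \<le> 1 - real T powr (- c0)"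
    by (auto simp: lr_alpha_def lr_beta_def)
qed

lemma pX_eq:
  assumes "0 < 1 - lr_alphabar T c0 c1 t"
  shows "pX T c0 c1 M t = (\<lambda>x::real^'n. \<integral>y. phk ((2*pi) powr (-real CARD('n)/2)
     * ((1 - lr_alphabar T c0 c1 t)^CARD('n)) powr (-1/2)) (1 - lr_alphabar T c0 c1 t)
     (sqrt (lr_alphabar T c0 c1 t)) x y \<partial>M)"
  unfolding pX_def[abs_def] phk_def using assms by (simp add: gauss_iso)

lemma lnK: "s > 0 \<Longrightarrow> ln ((2*pi) powr (-real n/2) * (s^n) powr (-1/2)) = -(real n/2)*ln(2*pi) - (real n/2)*ln s"
  by (simp add: ln_mult ln_powr ln_realpow)

lemma Kpos: "s > 0 \<Longrightarrow> 0 < (2*pi) powr (-real n/2) * ((s::real)^n) powr (-1/2)"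
  by simp

lemma ln_ratio: "(x::real) > 0 \<Longrightarrow> y > 0 \<Longrightarrow> ln (x / y) = ln x - ln y"
  by (simp add: ln_div)

lemma powr_det_pos: "(x::real) \<noteq> 0 \<Longrightarrow> 0 < x powr a \<and> ln (x powr a) = a * ln \<bar>x\<bar>"
  by (simp add: powr_def ln_real_def)

lemma lin5:
  fixes p1 p2 p3 D sdv Q A1 A2 A3 A4 A5 :: real
  assumes "p1 \<le> A1" "p2 \<le> A2" "-p3 \<le> A3" "Q \<le> A4" "sdv \<le> A5"
  shows "p1+p2-p3 + D + 1/2* sdv + 1/2*Q \<le> A1 + A2 + A3 + D + 1/2*A5 + 1/2*A4"
  using assms by linarith

lemma sum_arith:
  fixes p1 p2 p3 d c0 cR L l2pi tp XR Q T W sdv lf l36 Y :: real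
  assumes "p1 \<le> d/2*c0*L" "p2 \<le> d/2*(c0+1)*L" "-p3 \<le> d/2*l2pi + tp*XR"
    "Q \<le> 4*(tp*T)*W + 8*d^2*tp*XR" "sdv \<le> lf + d*(l36 + 2*(c0+2*cR)*L + 2*Y)"
  shows "p1+p2-p3 + d/2*l2pi + 1/2* sdv + 1/2*Q \<le> d*l2pi + lf/2 + d/2*l36 + (d/2*c0 + d/2*(c0+1) + d/2*(2*c0+4*cR))*L + d*Y + (1+4*d^2)*(tp*XR) + 2*(tp*T)*W"
proof -
  have "p1+p2-p3 + d/2*l2pi + 1/2* sdv + 1/2*Q \<le> d/2*c0*L + d/2*(c0+1)*L + (d/2*l2pi + tp*XR) + d/2*l2pi
     + 1/2*(lf + d*(l36 + 2*(c0+2*cR)*L + 2*Y)) + 1/2*(4*(tp*T)*W + 8*d^2*tp*XR)"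
    by (rule lin5[OF assms])
  also have "\<dots> = d*l2pi + lf/2 + d/2*l36 + (d/2*c0 + d/2*(c0+1) + d/2*(2*c0+4*cR))*L + d*Y + (1+4*d^2)*(tp*XR) + 2*(tp*T)*W"
    by (simp add: field_simps)
  finally show ?thesis .
qed

lemma main_point:
  fixes M :: "(real^'n) measure" and T :: nat and c0 c1 cR :: real and t :: nat
    and xt xprev :: "real^'n"
  assumes M: "prob_space M" and Ms: "sets M = sets borel"
    and AE: "AE y in M. norm y \<le> real T powr cR"
    and T: "2 \<le> T" and c0: "1 \<le> c0" and c1: "0 \<le> c1" and l1: "1 \<le> c1 * ln (real T)"
    and l2: "c1 * ln (real T) / real T \<le> 1/2" and cR: "0 < cR"
    and t: "2 \<le> t"
    and big: "real CARD('n) * ln (2*pi) + ln (fact CARD('n)) / 2 + real CARD('n) / 2 * ln (36 * real CARD('n) + 1)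
        + real CARD('n) + 1 + 4 * (real CARD('n))^2
        + (real CARD('n) / 2 * c0 + real CARD('n) / 2 * (c0 + 1) + real CARD('n) / 2 * (2 * c0 + 4 * cR)) * real T
        \<le> real T * real T"
  shows "ln (condX T c0 c1 M t xprev xt / condH T c0 c1 M t xprev xt)
                 \<le> real T powr (c0 + 2 * cR + 2)
                   * ((norm (xprev - (1 / sqrt (lr_alpha T c0 c1 t)) *\<^sub>R xt))\<^sup>2
                      + (norm xt)\<^sup>2 + 1)"
proof -
  define d where "d = CARD('n)"
  define ab where "ab = lr_alphabar T c0 c1 t"
  define ab' where "ab' = lr_alphabar T c0 c1 (t - 1)"
  define b where "b = lr_beta T c0 c1 t"
  define a where "a = lr_alpha T c0 c1 t"
  define s where "s = 1 - ab"
  define s' where "s' = 1 - ab'"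
  define R where "R = real T powr cR"
  define L where "L = ln (real T)"
  define K where "K = (2*pi) powr (-real d/2) * (s^d) powr (-1/2)"
  define K' where "K' = (2*pi) powr (-real d/2) * (s'^d) powr (-1/2)"
  have T0: "real T \<ge> 2" using T by simp
  have ab_f: "0 < ab" "ab \<le> a" "ab \<le> 1 - real T powr (- c0)"
    using lr_alphabar_facts[OF T c0 c1 l1 l2, of t] t unfolding ab_def a_def by auto
  have ab'_f: "0 < ab'" "ab' \<le> 1 - real T powr (- c0)"
    using lr_alphabar_facts[OF T c0 c1 l1 l2, of "t - 1"] t unfolding ab'_def by auto
  have b_f: "0 < b" "b \<le> 1/2" "real T powr (- c0) / real T \<le> b"
    using lr_beta_facts[OF T c0 c1 l1 l2, of t] t unfolding b_def by auto
  have ab_b: "a = 1 - b" unfolding a_def b_def lr_alpha_def by simp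
  have Tc0: "0 < real T powr (- c0)" using T0 by simp
  have s_f1: "real T powr (- c0) \<le> s" using ab_f(3) unfolding s_def by linarith
  have s_f2: "b \<le> s" using ab_f(2) ab_b unfolding s_def by linarith
  have s_f3: "s < 1" using ab_f(1) unfolding s_def by linarith
  have s_f4: "0 < s" using s_f1 Tc0 by linarith
  note s_f = s_f1 s_f2 s_f3 s_f4
  have s'_f1: "real T powr (- c0) \<le> s'" using ab'_f(2) unfolding s'_def by linarith
  have s'_f2: "s' < 1" using ab'_f(1) unfolding s'_def by linarith
  have s'_f3: "0 < s'" using s'_f1 Tc0 by linarith
  note s'_f = s'_f1 s'_f2 s'_f3
  have R1: "1 \<le> R" unfolding R_def using T0 cR by (simp add: ge_one_powr_ge_zero)
  have Kp: "0 < K" unfolding K_def using s_f by simp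
  have K'p: "0 < K'" unfolding K'_def using s'_f by simp
  have sab: "sqrt ab \<le> 1" using ab_f ab_b b_f by simp
  have "ab' \<le> 1" using ab'_f(2) Tc0 by linarith
  hence sab': "sqrt ab' \<le> 1" by simp
  have AE': "AE y in M. norm y \<le> R" using AE unfolding R_def .
  interpret G: gset M K s "sqrt ab" R
    by (rule gset.intro[OF M Ms AE' s_f4 Kp _ sab]) (use ab_f R1 in auto)
  interpret G': gset M K' s' "sqrt ab'" R
    by (rule gset.intro[OF M Ms AE' s'_f3 K'p _ sab']) (use ab'_f R1 in auto)
  have e1: "pX T c0 c1 M t = (\<lambda>x. \<integral>y. phk K s (sqrt ab) x y \<partial>M)"
    unfolding K_def d_def s_def ab_def by (rule pX_eq) (use s_f4 in \<open>simp add: s_def ab_def\<close>)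
  have pX_t: "pX T c0 c1 M t = G.P" unfolding e1 by (rule ext) (simp add: G.P_def)
  have e2: "pX T c0 c1 M (t - 1) = (\<lambda>x. \<integral>y. phk K' s' (sqrt ab') x y \<partial>M)"
    unfolding K'_def d_def s'_def ab'_def by (rule pX_eq) (use s'_f3 in \<open>simp add: s'_def ab'_def\<close>)
  have pX_t': "pX T c0 c1 M (t - 1) = G'.P" unfolding e2 by (rule ext) (simp add: G'.P_def)
  have sc: "score T c0 c1 M t = (\<lambda>x. (1 / G.P x) *\<^sub>R G.GP x)"
    unfolding score_def[abs_def] pX_t by (rule ext) (rule G.score_eq)
  have gf: "gfun T c0 c1 M t = (\<lambda>x. (-s) *\<^sub>R ((1 / G.P x) *\<^sub>R G.GP x))"
    unfolding gfun_def[abs_def] sc s_def ab_def by simp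
  have Jb: "\<bar>Jac T c0 c1 M t x $ i $ j\<bar> \<le> 2 * (norm x + R)^2 / s + 1" for x i j
    unfolding Jac_def gf by (rule G.Jac_bound)
  have mu: "muhat T c0 c1 M t x = (1 / sqrt a) *\<^sub>R (x + b *\<^sub>R ((1 / G.P x) *\<^sub>R G.GP x))" for x
    unfolding muhat_def sc a_def[symmetric] using ab_b by simp
  define A where "A = mat 1 - (b / s) *\<^sub>R Jac T c0 c1 M t xt"
  define k where "k = b / (2 * a)"
  have Sig: "SigmaH T c0 c1 M t xt = k *\<^sub>R (A ** transpose A + mat 1)"
    unfolding SigmaH_def A_def k_def a_def[symmetric] s_def ab_def[symmetric] using ab_b by (simp add: Let_def)
  define q where "q = gauss_pdf (sqrt a *\<^sub>R xprev) (b *\<^sub>R mat 1) xt"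
  have cX: "condX T c0 c1 M t xprev xt = G'.P xprev * q / G.P xt"
    unfolding condX_def pX_t pX_t' q_def a_def[symmetric] using ab_b by simp
  have cH: "condH T c0 c1 M t xprev xt = gauss_pdf (muhat T c0 c1 M t xt) (k *\<^sub>R (A ** transpose A + mat 1)) xprev"
    unfolding condH_def Sig ..
  define X where "X = (norm xt)^2"
  define W where "W = (norm (xprev - (1 / sqrt a) *\<^sub>R xt))^2"
  define Y where "Y = X + 1"
  define U where "U = real T powr c0 * R^2"
  define Sd where "Sd = det (k *\<^sub>R (A ** transpose A + mat 1))"
  define Q where "Q = (xprev - muhat T c0 c1 M t xt) \<bullet>
       (matrix_inv (k *\<^sub>R (A ** transpose A + mat 1)) *v (xprev - muhat T c0 c1 M t xt))"
  have L0: "0 \<le> L" "L \<le> real T" unfolding L_def using T0 ln_le_minus_one[of "real T"] by auto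
  have X0: "0 \<le> X" unfolding X_def by simp
  have W0: "0 \<le> W" unfolding W_def by simp
  have Y1: "1 \<le> Y" unfolding Y_def using X0 by simp
  have Tc0': "1 \<le> real T powr c0" using T0 c0 by (intro ge_one_powr_ge_zero) auto
  have R2: "1 \<le> R^2" using R1 by (simp add: one_le_power)
  have U1: "1 \<le> U" unfolding U_def using mult_mono[OF Tc0' R2] by simp
  have Pz: "0 < G'.P xprev" by (rule G'.P_pos)
  have Px: "0 < G.P xt" by (rule G.P_pos)
  have l2p: "0 \<le> ln (2 * pi)" by (rule ln_ge_zero) (use pi_gt3 in simp)
  have lnTc0: "ln (real T powr (- c0)) = - c0 * L" unfolding L_def using T0 by (simp add: ln_powr)
  have qe: "q = (2 * pi) powr (- real d / 2) * (b ^ d) powr (-1/2) * exp (- ((xt - sqrt a *\<^sub>R xprev) \<bullet> (xt - sqrt a *\<^sub>R xprev)) / (2 * b))"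
    unfolding q_def d_def by (rule gauss_iso[OF b_f(1)])
  have q_pos: "0 < q" unfolding qe using b_f by simp
  have B1: "ln (G'.P xprev) \<le> real d / 2 * c0 * L"
  proof -
    have "ln (G'.P xprev) \<le> ln K'" using Pz G'.P_le[of xprev] K'p by simp
    also have "\<dots> = -(real d/2)*ln(2*pi) - (real d/2)*ln s'" unfolding K'_def by (rule lnK[OF s'_f3])
    also have "\<dots> \<le> - (real d/2) * ln s'" using l2p by simp
    also have "\<dots> \<le> real d / 2 * c0 * L"
    proof -
      have "ln (real T powr (- c0)) \<le> ln s'" using ln_le_cancel_iff[OF Tc0 s'_f3] s'_f1 by blast
      hence "- c0 * L \<le> ln s'" unfolding L_def using T0 by simp
      hence h: "- ln s' \<le> c0 * L" by linarith
      have "real d / 2 * (- ln s') \<le> real d / 2 * (c0 * L)" by (rule mult_left_mono[OF h]) simp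
      thus ?thesis by (simp add: algebra_simps)
    qed
    finally show ?thesis .
  qed
  have B2: "ln q \<le> real d / 2 * (c0 + 1) * L"
  proof -
    have "ln q = ln ((2 * pi) powr (- real d / 2) * (b ^ d) powr (-1/2)) - ((xt - sqrt a *\<^sub>R xprev) \<bullet> (xt - sqrt a *\<^sub>R xprev)) / (2 * b)"
      unfolding qe using b_f by (simp add: ln_mult)
    also have "\<dots> \<le> ln ((2 * pi) powr (- real d / 2) * (b ^ d) powr (-1/2))"
      using b_f by simp
    also have "\<dots> = -(real d/2)*ln(2*pi) - (real d/2)*ln b" by (rule lnK[OF b_f(1)])
    also have "\<dots> \<le> - (real d/2) * ln b" using l2p by simp
    also have "\<dots> \<le> real d / 2 * (c0 + 1) * L"
    proof -
      have Tq: "0 < real T powr (- c0) / real T" using Tc0 T0 by simp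
      have "ln (real T powr (- c0) / real T) \<le> ln b" using ln_le_cancel_iff[OF Tq b_f(1)] b_f(3) by blast
      hence "- c0 * L - L \<le> ln b" using T0 Tc0 unfolding L_def by (simp add: ln_div)
      hence h: "- ln b \<le> (c0 + 1) * L" by (simp add: algebra_simps)
      have "real d / 2 * (- ln b) \<le> real d / 2 * ((c0 + 1) * L)" by (rule mult_left_mono[OF h]) simp
      thus ?thesis by (simp add: algebra_simps)
    qed
    finally show ?thesis .
  qed
  have invs: "1 / s \<le> real T powr c0"
  proof -
    have "1 / s \<le> 1 / real T powr (- c0)" using s_f1 Tc0 by (simp add: frac_le)
    thus ?thesis by (simp add: powr_minus divide_inverse)
  qed
  have rho2: "(norm xt + R)^2 \<le> 2 * (X + R^2)"
    unfolding X_def using sum_squares_bound[of "norm xt" R] by (simp add: power2_sum algebra_simps)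
  have B3: "- ln (G.P xt) \<le> real d / 2 * ln (2*pi) + real T powr c0 * (X + R^2)"
  proof -
    have lo: "K * exp (- (1 / (2 * s)) * (norm xt + R)^2) \<le> G.P xt" by (rule G.P_lower)
    have "ln (K * exp (- (1 / (2 * s)) * (norm xt + R)^2)) \<le> ln (G.P xt)"
      using lo Kp Px by simp
    hence "ln K - (1 / (2 * s)) * (norm xt + R)^2 \<le> ln (G.P xt)" using Kp by (simp add: ln_mult)
    moreover have "ln K = -(real d/2)*ln(2*pi) - (real d/2)*ln s" unfolding K_def by (rule lnK[OF s_f4])
    moreover have "real d / 2 * ln s \<le> 0" using s_f by (intro mult_nonneg_nonpos) auto
    moreover have "(1 / (2 * s)) * (norm xt + R)^2 \<le> real T powr c0 * (X + R^2)"
    proof -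
      have "(1 / (2 * s)) * (norm xt + R)^2 \<le> (1 / (2 * s)) * (2 * (X + R^2))"
        using rho2 s_f by (intro mult_left_mono) auto
      also have "\<dots> = (1 / s) * (X + R^2)" using s_f4 by (simp add: field_simps)
      also have "\<dots> \<le> real T powr c0 * (X + R^2)" using invs X0 by (intro mult_right_mono) auto
      finally show ?thesis .
    qed
    ultimately show ?thesis by linarith
  qed
  have B4: "Q \<le> 4 * (real T powr c0 * real T) * W + 8 * (real d)^2 * real T powr c0 * (X + R^2)" if Sd0: "Sd \<noteq> 0"
  proof -
    have a0: "0 < a" "a \<le> 1" using ab_b b_f by auto
    have kp: "0 < k" unfolding k_def using a0 b_f by simp
    define v where "v = xprev - muhat T c0 c1 M t xt"
    define w where "w = xprev - (1 / sqrt a) *\<^sub>R xt"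
    define sc where "sc = (1 / G.P xt) *\<^sub>R G.GP xt"
    have Qk: "Q \<le> (norm v)^2 / k"
      unfolding Q_def v_def by (rule quad_bound[OF kp Sd0[unfolded Sd_def]])
    have ve: "v = w - (b / sqrt a) *\<^sub>R sc"
      unfolding v_def w_def sc_def mu by (simp add: algebra_simps scaleR_add_right)
    have nsc: "norm sc \<le> real d * ((norm xt + R) / s)" unfolding sc_def d_def by (rule G.score_norm)
    have nv: "norm v \<le> norm w + (b / sqrt a) * norm sc"
      unfolding ve using norm_triangle_ineq4[of w "(b / sqrt a) *\<^sub>R sc"] b_f a0 by simp
    have nv2: "(norm v)^2 \<le> 2 * W + 2 * (b^2 / a) * (norm sc)^2"
    proof -
      have "(norm v)^2 \<le> (norm w + (b / sqrt a) * norm sc)^2" using nv by (simp add: power_mono)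
      also have "\<dots> \<le> 2 * (norm w)^2 + 2 * ((b / sqrt a) * norm sc)^2"
        using sum_squares_bound[of "norm w" "(b / sqrt a) * norm sc"] by (simp add: power2_sum algebra_simps)
      also have "((b / sqrt a) * norm sc)^2 = (b^2 / a) * (norm sc)^2"
        using a0 by (simp add: power_mult_distrib power_divide)
      finally show ?thesis unfolding W_def w_def by (simp add: mult.assoc)
    qed
    have "(norm v)^2 / k = (2 * a / b) * (norm v)^2" unfolding k_def using a0 b_f by simp
    also have "\<dots> \<le> (2 * a / b) * (2 * W + 2 * (b^2 / a) * (norm sc)^2)"
      using nv2 a0 b_f by (intro mult_left_mono) auto
    also have "\<dots> = 4 * (a / b) * W + 4 * b * (norm sc)^2"
      using a0 b_f by (simp add: field_simps power2_eq_square)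
    also have "\<dots> \<le> 4 * (real T powr c0 * real T) * W + 8 * (real d)^2 * real T powr c0 * (X + R^2)"
    proof -
      have "a / b \<le> 1 / b" using a0 b_f by (simp add: divide_right_mono)
      also have "1 / b \<le> 1 / (real T powr (- c0) / real T)"
        by (rule frac_le) (use b_f Tc0 T0 in auto)
      also have "\<dots> = real T powr c0 * real T" using T0 by (simp add: powr_minus divide_inverse)
      finally have ab1: "a / b \<le> real T powr c0 * real T" .
      have t1: "4 * (a / b) * W \<le> 4 * (real T powr c0 * real T) * W"
        using mult_right_mono[OF ab1 W0] by linarith
      have "(norm sc)^2 \<le> (real d * ((norm xt + R) / s))^2"
        using nsc by (simp add: power_mono)
      also have "\<dots> = (real d)^2 * (norm xt + R)^2 / s^2" by (simp add: power_mult_distrib power_divide)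
      finally have sc2: "(norm sc)^2 \<le> (real d)^2 * (norm xt + R)^2 / s^2" .
      have "b * (norm sc)^2 \<le> b * ((real d)^2 * (norm xt + R)^2 / s^2)"
        using sc2 b_f by (intro mult_left_mono) auto
      also have "\<dots> \<le> s * ((real d)^2 * (norm xt + R)^2 / s^2)"
        using s_f2 by (intro mult_right_mono) auto
      also have "\<dots> = (real d)^2 * (norm xt + R)^2 * (1 / s)" using s_f4 by (simp add: field_simps power2_eq_square)
      also have "\<dots> \<le> (real d)^2 * (2 * (X + R^2)) * real T powr c0"
        using rho2 invs X0 s_f4 by (intro mult_mono mult_left_mono) auto
      finally have t2: "b * (norm sc)^2 \<le> (real d)^2 * (2 * (X + R^2)) * real T powr c0" .
      show ?thesis using t1 t2 by (simp add: algebra_simps)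
    qed
    finally show ?thesis using Qk by linarith
  qed
  have f1': "real T powr c0 * (X + R^2) \<le> U * Y"
  proof -
    have "X * 1 \<le> X * R^2" by (rule mult_left_mono[OF R2 X0])
    hence "X + R^2 \<le> R^2 * Y" unfolding Y_def by (simp add: algebra_simps)
    thus ?thesis unfolding U_def using Tc0' by (simp add: mult_left_mono mult.assoc)
  qed
  have UY1': "1 \<le> U * Y" using mult_mono[OF U1 Y1] U1 by simp
  have B5: "ln \<bar>Sd\<bar> \<le> ln (fact d) + real d * (ln (36 * real d + 1) + 2 * (c0 + 2 * cR) * L + 2 * Y)"
    if Sd0: "Sd \<noteq> 0"
  proof -
    have a0: "1/2 \<le> a" "a \<le> 1" using ab_b b_f by auto
    have k0: "0 \<le> k" "k \<le> 1" unfolding k_def using a0 b_f by (auto simp: field_simps)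
    define mA where "mA = 2 + 2 * (norm xt + R)^2 / s"
    have bs: "b / s \<le> 1" "0 \<le> b / s" using s_f2 s_f4 b_f by auto
    have Ab: "\<bar>A $ i $ j\<bar> \<le> mA" for i j
    proof -
      have "\<bar>A $ i $ j\<bar> \<le> \<bar>(mat 1 :: real^'n^'n) $ i $ j\<bar> + (b / s) * \<bar>Jac T c0 c1 M t xt $ i $ j\<bar>"
      proof -
        have e: "A $ i $ j = (mat 1 :: real^'n^'n) $ i $ j - (b / s) * Jac T c0 c1 M t xt $ i $ j"
          unfolding A_def by simp
        have "\<bar>(b / s) * Jac T c0 c1 M t xt $ i $ j\<bar> = (b / s) * \<bar>Jac T c0 c1 M t xt $ i $ j\<bar>"
          using bs(2) abs_mult[of "b / s"] by (simp only: abs_of_nonneg[OF bs(2)])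
        thus ?thesis unfolding e using abs_triangle_ineq4[of "(mat 1 :: real^'n^'n) $ i $ j" "(b / s) * Jac T c0 c1 M t xt $ i $ j"]
          by linarith
      qed
      also have "\<dots> \<le> 1 + 1 * (2 * (norm xt + R)^2 / s + 1)"
        using bs Jb[of xt i j] by (intro add_mono mult_mono) (auto simp: mat_def)
      finally show ?thesis unfolding mA_def by simp
    qed
    define m where "m = real d * mA^2 + 1"
    have m1: "1 \<le> m" unfolding m_def by simp
    have Sb: "\<bar>(k *\<^sub>R (A ** transpose A + mat 1)) $ i $ j\<bar> \<le> m" for i j
    proof -
      have "\<bar>(k *\<^sub>R (A ** transpose A + mat 1)) $ i $ j\<bar> \<le> k * (real CARD('n) * mA^2 + 1)"
        by (rule Sigma_entry_bound[OF k0(1) Ab])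
      also have "\<dots> \<le> 1 * m" unfolding m_def d_def using k0 m1 unfolding m_def d_def by (intro mult_right_mono) auto
      finally show ?thesis by simp
    qed
    have dS: "\<bar>Sd\<bar> \<le> fact d * m ^ d" unfolding Sd_def d_def by (rule det_bound[OF Sb[unfolded d_def]])
    have "ln \<bar>Sd\<bar> \<le> ln (fact d * m ^ d)" using dS Sd0 m1 by (subst ln_le_cancel_iff) auto
    also have "\<dots> = ln (fact d) + real d * ln m" using m1 by (simp add: ln_mult ln_realpow)
    also have "ln m \<le> ln (36 * real d + 1) + 2 * (c0 + 2 * cR) * L + 2 * Y"
    proof -
      have mA6: "mA \<le> 6 * (U * Y)"
      proof -
        have "2 * (norm xt + R)^2 / s = 2 * (norm xt + R)^2 * (1 / s)" by simp
        also have "\<dots> \<le> 2 * (2 * (X + R^2)) * real T powr c0"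
          using rho2 invs s_f4 X0 by (intro mult_mono) auto
        also have "\<dots> = 4 * (real T powr c0 * (X + R^2))" by simp
        also have "\<dots> \<le> 4 * (U * Y)" using f1' by simp
        finally show ?thesis unfolding mA_def using UY1' by simp
      qed
      have mA0: "0 \<le> mA" unfolding mA_def using s_f4 by simp
      have "m \<le> real d * (6 * (U * Y))^2 + 1" unfolding m_def
        using mA6 mA0 by (intro add_mono mult_left_mono power_mono) auto
      also have "\<dots> \<le> (36 * real d + 1) * (U * Y)^2"
      proof -
        have "1 \<le> (U * Y)^2" using UY1' by (simp add: one_le_power)
        thus ?thesis by (simp add: algebra_simps power_mult_distrib)
      qed
      finally have mb: "m \<le> (36 * real d + 1) * (U * Y)^2" .
      have U0: "0 < U" "0 < Y" using U1 Y1 by auto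
      have "ln m \<le> ln ((36 * real d + 1) * (U * Y)^2)" using mb m1 by (subst ln_le_cancel_iff) auto
      also have "\<dots> = ln (36 * real d + 1) + 2 * ln U + 2 * ln Y"
        using U0 by (simp add: ln_mult ln_realpow)
      also have "ln U = (c0 + 2 * cR) * L"
        unfolding U_def R_def L_def using T0 by (simp add: ln_mult ln_realpow ln_powr algebra_simps)
      also have "ln Y \<le> Y" using ln_le_minus_one[OF U0(2)] by simp
      finally show ?thesis by (simp add: algebra_simps)
    qed
    hence "real d * ln m \<le> real d * (ln (36 * real d + 1) + 2 * (c0 + 2 * cR) * L + 2 * Y)"
      by (intro mult_left_mono) auto
    finally show ?thesis by simp
  qed
  have RHS: "real T powr (c0 + 2 * cR + 2) * (W + X + 1) = U * (real T * real T) * (W + Y)"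
  proof -
    have "real T powr (c0 + 2 * cR + 2) = real T powr c0 * (real T powr cR)^2 * (real T * real T)"
    proof -
      have "real T powr (2 * cR) = real T powr (cR + cR)" by simp
      also have "\<dots> = real T powr cR * real T powr cR" by (rule powr_add)
      finally have h: "real T powr (2 * cR) = real T powr cR * real T powr cR" .
      show ?thesis using T0 by (simp add: powr_add h power2_eq_square powr_realpow[symmetric] mult.assoc)
    qed
    thus ?thesis unfolding U_def R_def Y_def by (simp add: algebra_simps)
  qed
  have RHS0: "0 \<le> real T powr (c0 + 2 * cR + 2) * (W + X + 1)" using W0 X0 by simp
  show ?thesis
  proof (cases "condX T c0 c1 M t xprev xt = 0 \<or> condH T c0 c1 M t xprev xt = 0")
    case True
    thus ?thesis using RHS0 unfolding W_def X_def by auto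
  next
    case False
    have Sd0: "Sd \<noteq> 0"
    proof
      assume "Sd = 0"
      hence "condH T c0 c1 M t xprev xt = 0" unfolding cH gauss_pdf_def Sd_def by simp
      thus False using False by simp
    qed
    have cHe: "condH T c0 c1 M t xprev xt = (2 * pi) powr (- real d / 2) * Sd powr (-1/2) * exp (- (1/2) * Q)"
      unfolding cH gauss_pdf_def Sd_def Q_def d_def ..
    have sdp: "0 < Sd powr (-1/2)" "ln (Sd powr (-1/2)) = (-1/2) * ln \<bar>Sd\<bar>"
      using powr_det_pos[OF Sd0] by auto
    have cHp: "0 < condH T c0 c1 M t xprev xt" unfolding cHe using sdp by simp
    have lncH: "ln (condH T c0 c1 M t xprev xt) = - (real d / 2) * ln (2 * pi) - (1/2) * ln \<bar>Sd\<bar> - (1/2) * Q"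
      unfolding cHe using sdp by (simp add: ln_mult ln_powr)
    have cXp: "0 < condX T c0 c1 M t xprev xt"
    proof -
      have "0 \<le> condX T c0 c1 M t xprev xt" unfolding cX using Pz q_pos Px by simp
      thus ?thesis using False by simp
    qed
    have lncX: "ln (condX T c0 c1 M t xprev xt) = ln (G'.P xprev) + ln q - ln (G.P xt)"
      unfolding cX using Pz q_pos Px by (simp add: ln_div ln_mult)
    have main: "ln (condX T c0 c1 M t xprev xt / condH T c0 c1 M t xprev xt)
       = ln (G'.P xprev) + ln q - ln (G.P xt) + (real d / 2) * ln (2 * pi) + (1/2) * ln \<bar>Sd\<bar> + (1/2) * Q"
      using ln_ratio[OF cXp cHp] lncX lncH by simp
    define Cl where "Cl = real d / 2 * c0 + real d / 2 * (c0 + 1) + real d / 2 * (2 * c0 + 4 * cR)"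
    define C0c where "C0c = real d * ln (2*pi) + ln (fact d) / 2 + real d / 2 * ln (36 * real d + 1)"
    have sum1: "ln (condX T c0 c1 M t xprev xt / condH T c0 c1 M t xprev xt)
      \<le> C0c + Cl * L + real d * Y + (1 + 4 * (real d)^2) * (real T powr c0 * (X + R^2))
         + 2 * (real T powr c0 * real T) * W"
      unfolding main Cl_def C0c_def by (rule sum_arith[OF B1 B2 B3 B4[OF Sd0] B5[OF Sd0]])
    have f1: "real T powr c0 * (X + R^2) \<le> U * Y"
    proof -
      have "X * 1 \<le> X * R^2" by (rule mult_left_mono[OF R2 X0])
      hence "X + R^2 \<le> R^2 * Y" unfolding Y_def by (simp add: algebra_simps)
      thus ?thesis unfolding U_def using Tc0' by (simp add: mult_left_mono mult.assoc)
    qed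
    have lf0: "0 \<le> ln (fact d :: real)" by (rule ln_ge_zero) (simp add: fact_ge_1)
    have l2: "0 \<le> ln (2 * pi)" by (rule ln_ge_zero) (use pi_gt3 in simp)
    have l3: "0 \<le> ln (36 * real d + 1)" by (rule ln_ge_zero) simp
    have C0: "0 \<le> C0c" unfolding C0c_def using lf0 l2 l3 by simp
    have Cl0: "0 \<le> Cl" unfolding Cl_def using c0 cR by simp
    have UY1: "1 \<le> U * Y" using U1 Y1 mult_mono[OF U1 Y1] by simp
    have f2: "Cl * L \<le> Cl * real T * (U * Y)"
    proof -
      have "Cl * L \<le> Cl * real T" using L0 Cl0 by (simp add: mult_left_mono)
      also have "\<dots> \<le> Cl * real T * (U * Y)"
        using mult_left_mono[OF UY1, of "Cl * real T"] Cl0 T0 by simp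
      finally show ?thesis .
    qed
    have f3: "C0c \<le> C0c * (U * Y)" using UY1 C0 by (simp add: mult_le_cancel_left1)
    have "1 * Y \<le> U * Y" by (rule mult_right_mono[OF U1]) (use Y1 in simp)
    hence f4: "real d * Y \<le> real d * (U * Y)" by (intro mult_left_mono) auto
    have f4': "1 \<le> U * Y" by (rule UY1)
    have f5: "2 * (real T powr c0 * real T) * W \<le> U * (real T * real T) * W"
    proof -
      have "2 * real T \<le> real T * real T" using T0 by simp
      also have "\<dots> \<le> R^2 * (real T * real T)" using mult_right_mono[OF R2, of "real T * real T"] by simp
      finally have h: "2 * real T \<le> R^2 * (real T * real T)" .
      have "real T powr c0 * (2 * real T) \<le> real T powr c0 * (R^2 * (real T * real T))"
        by (rule mult_left_mono[OF h]) simp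
      hence "2 * (real T powr c0 * real T) \<le> U * (real T * real T)"
        unfolding U_def by (simp add: algebra_simps)
      thus ?thesis using W0 by (rule mult_right_mono)
    qed
    have bigd: "C0c + Cl * real T + real d + 1 + 4 * (real d)^2 \<le> real T * real T"
      using big unfolding C0c_def Cl_def d_def by simp
    have "C0c + Cl * L + real d * Y + (1 + 4 * (real d)^2) * (real T powr c0 * (X + R^2))
         \<le> (U * Y) * (C0c + Cl * real T + real d + 1 + 4 * (real d)^2)"
    proof -
      have "(1 + 4 * (real d)^2) * (real T powr c0 * (X + R^2)) \<le> (1 + 4 * (real d)^2) * (U * Y)"
        using f1 by (simp add: mult_left_mono)
      thus ?thesis using f2 f3 f4 by (simp add: algebra_simps)
    qed
    also have "\<dots> \<le> (U * Y) * (real T * real T)"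
      using bigd UY1 by (simp add: mult_left_mono)
    finally have "ln (condX T c0 c1 M t xprev xt / condH T c0 c1 M t xprev xt)
        \<le> (U * Y) * (real T * real T) + U * (real T * real T) * W"
      using sum1 f5 by linarith
    also have "\<dots> = real T powr (c0 + 2 * cR + 2) * (W + X + 1)"
      unfolding RHS by (simp add: algebra_simps)
    finally show ?thesis unfolding W_def X_def a_def .
  qed
qed

lemma T_facts:
  fixes c1 :: real and T :: nat
  assumes c1: "1 \<le> c1" and T3: "3 \<le> real T" and T16: "16 * c1^2 \<le> real T"
  shows "1 \<le> c1 * ln (real T)" "c1 * ln (real T) / real T \<le> 1/2"
proof -
  have "1 \<le> ln (real T)"
  proof -
    have "exp 1 \<le> real T" using exp_le T3 by linarith
    hence "ln (exp 1) \<le> ln (real T)" using T3 by (subst ln_le_cancel_iff) auto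
    thus ?thesis by simp
  qed
  thus "1 \<le> c1 * ln (real T)" using c1 by (metis mult_mono mult.right_neutral zero_le_one order_trans)
  have Tp: "0 < real T" using T3 by simp
  have sq: "0 < sqrt (real T)" using Tp by simp
  have "ln (real T) = 2 * ln (sqrt (real T))" using Tp by (simp add: ln_sqrt)
  also have "\<dots> \<le> 2 * sqrt (real T)" using ln_le_minus_one[OF sq] by simp
  finally have l: "ln (real T) \<le> 2 * sqrt (real T)" .
  have "4 * c1 \<le> sqrt (real T)"
  proof -
    have "(4 * c1)^2 \<le> real T" using T16 by (simp add: power_mult_distrib)
    thus ?thesis by (rule real_le_rsqrt)
  qed
  hence "c1 * ln (real T) \<le> c1 * (2 * sqrt (real T))" using l c1 by (intro mult_left_mono) auto
  also have "\<dots> \<le> sqrt (real T) / 4 * (2 * sqrt (real T))"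
    using \<open>4 * c1 \<le> sqrt (real T)\<close> sq by (intro mult_right_mono) auto
  also have "\<dots> = real T / 2" using Tp by (simp add: power2_eq_square[symmetric])
  finally show "c1 * ln (real T) / real T \<le> 1/2" using Tp by (simp add: divide_simps)
qed

theorem lemma13:
  fixes cR :: real
  assumes "cR > 0"
  shows "\<exists>C0 C1. \<forall>c0\<ge>C0. \<forall>c1\<ge>C1. \<exists>T0::nat. \<forall>T\<ge>T0. \<forall>M :: (real^'n) measure.
           (prob_space M \<and> sets M = sets borel \<and> absolutely_continuous lborel M
            \<and> (AE y in M. norm y \<le> real T powr cR)) \<longrightarrow>
           (\<forall>t. 2 \<le> t \<and> t \<le> T \<longrightarrow>
              (\<forall>xt xprev :: real^'n.
                 ln (condX T c0 c1 M t xprev xt / condH T c0 c1 M t xprev xt)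
                 \<le> real T powr (c0 + 2 * cR + 2)
                   * ((norm (xprev - (1 / sqrt (lr_alpha T c0 c1 t)) *\<^sub>R xt))\<^sup>2
                      + (norm xt)\<^sup>2 + 1)))"
proof (rule exI[of _ 1], rule exI[of _ 1], intro allI impI)
  fix c0 c1 :: real assume c0: "1 \<le> c0" and c1: "1 \<le> c1"
  define d where "d = real CARD('n)"
  define Cc where "Cc = d * ln (2*pi) + ln (fact CARD('n)) / 2 + d / 2 * ln (36 * d + 1) + d + 1 + 4 * d^2"
  define Cl where "Cl = d / 2 * c0 + d / 2 * (c0 + 1) + d / 2 * (2 * c0 + 4 * cR)"
  have Cc0: "0 \<le> Cc"
  proof -
    have "0 \<le> ln (fact CARD('n) :: real)" by (rule ln_ge_zero) (simp add: fact_ge_1)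
    moreover have "0 \<le> ln (2 * pi)" by (rule ln_ge_zero) (use pi_gt3 in simp)
    moreover have "0 \<le> ln (36 * d + 1)" by (rule ln_ge_zero) (simp add: d_def)
    ultimately show ?thesis unfolding Cc_def d_def by simp
  qed
  have Cl0: "0 \<le> Cl" unfolding Cl_def d_def using c0 assms by simp
  define T0 where "T0 = nat \<lceil>max 3 (max (16 * c1^2) (Cc + Cl + 1))\<rceil>"
  show "\<exists>T0::nat. \<forall>T\<ge>T0. \<forall>M :: (real^'n) measure.
           (prob_space M \<and> sets M = sets borel \<and> absolutely_continuous lborel M
            \<and> (AE y in M. norm y \<le> real T powr cR)) \<longrightarrow>
           (\<forall>t. 2 \<le> t \<and> t \<le> T \<longrightarrow>
              (\<forall>xt xprev :: real^'n.
                 ln (condX T c0 c1 M t xprev xt / condH T c0 c1 M t xprev xt)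
                 \<le> real T powr (c0 + 2 * cR + 2)
                   * ((norm (xprev - (1 / sqrt (lr_alpha T c0 c1 t)) *\<^sub>R xt))\<^sup>2
                      + (norm xt)\<^sup>2 + 1)))"
  proof (intro exI[of _ T0] allI impI, elim conjE)
    fix T :: nat and M :: "(real^'n) measure" and t :: nat and xt xprev :: "real^'n"
    assume T: "T0 \<le> T" and M: "prob_space M" and Ms: "sets M = sets borel"
      and AE: "AE y in M. norm y \<le> real T powr cR" and t: "2 \<le> t" "t \<le> T"
    have TT: "max 3 (max (16 * c1^2) (Cc + Cl + 1)) \<le> real T"
      using T unfolding T0_def by linarith
    have T3: "3 \<le> real T" and T16: "16 * c1^2 \<le> real T" and TC: "Cc + Cl + 1 \<le> real T"
      using TT by auto
    note tf = T_facts[OF c1 T3 T16]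
    have big': "Cc + Cl * real T \<le> real T * real T"
    proof -
      have "Cc + Cl * real T \<le> Cc * real T + Cl * real T" using Cc0 T3 by (simp add: mult_le_cancel_left1)
      also have "\<dots> = (Cc + Cl) * real T" by (simp add: algebra_simps)
      also have "\<dots> \<le> real T * real T" using TC T3 by (intro mult_right_mono) auto
      finally show ?thesis .
    qed
    show "ln (condX T c0 c1 M t xprev xt / condH T c0 c1 M t xprev xt)
                 \<le> real T powr (c0 + 2 * cR + 2)
                   * ((norm (xprev - (1 / sqrt (lr_alpha T c0 c1 t)) *\<^sub>R xt))\<^sup>2
                      + (norm xt)\<^sup>2 + 1)"
    proof (rule main_point[OF M Ms AE _ c0 _ tf(1) tf(2) assms t(1)])
      show "2 \<le> T" using T3 by simp
      show "0 \<le> c1" using c1 by simp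
      show "real CARD('n) * ln (2*pi) + ln (fact CARD('n)) / 2 + real CARD('n) / 2 * ln (36 * real CARD('n) + 1)
        + real CARD('n) + 1 + 4 * (real CARD('n))^2
        + (real CARD('n) / 2 * c0 + real CARD('n) / 2 * (c0 + 1) + real CARD('n) / 2 * (2 * c0 + 4 * cR)) * real T
        \<le> real T * real T"
        using big' unfolding Cc_def Cl_def d_def by simp
    qed
  qed
qed

end
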